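(* Let $M$, $x$, $T$, $B$, the encoding $\langle\cdot\rangle$ and the coin set $\mathcal{C}$ be as in the context. Define $$W:=\langle C_1\rangle\cdot B^{(T-1)T},$$ where $C_1$ is the configuration with state $q_0$, head position $1$, and tape $\$\,x_1\cdots x_n\perp^{T-n-1}$. Define the query coin $$c^*:=c_{\mathrm{transition}}(q_{\mathrm{accept}},\$,\perp,\perp,2,T)=g(\$)B^{T-1}+p(q_{\mathrm{accept}},\perp)B^{T-2}+g(\perp)B^{T-3}.$$ Then $M$ accepts $x$ if and only if $c^*$ belongs to the greedy set of coin change $\mathcal{G}$ with respect to $W$ and $\mathcal{C}$.
   Context: Turing machine. $M=\langle Q,\Gamma,\Sigma,\delta,q_0,q_{\mathrm{accept}},q_{\mathrm{reject}}\rangle$ is a deterministic single-tape Turing machine: - $\perp\in\Gamma$ is the blank symbol and $\Sigma\subseteq\Gamma\setminus\{\perp\}$. - $F=\{q_{\mathrm{accept}},q_{\mathrm{reject}}\}$ is the set of halting states. - $\delta:(Q\setminus F)\times\Gamma\to Q\times\Gamma\times\{L,R\}$ is the transition function. Assumptions on $M$: - The first tape cell always holds a left endmarker $\$\in\Gamma$. Whenever the head reads $\$$ in a state $q\notin F$, we have $\delta(q,\$)=(q',\$,R)$ for some $q'$. - Before entering a halting state, the head moves to the endmarker, then overwrites cells 2 and 3 with $\perp$, and halts over cell 2 in the halting state. - On input $x=x_1\cdots x_n$, $M$ halts within $T=C_M n^{\ell}$ steps, where $T\ge n+3$. Hence only tape cells $1,\dots,T$ are used, and the head never reaches cell $T$.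 A configuration consists of a state $q$, a head position $h$ with $1\le h\le T$, and tape contents $a_1\cdots a_T\in\Gamma^T$. Numerical encoding: - Fix bijections $f:Q\to\{1,\dots,s\}$ and $g:\Gamma\to\{1,\dots,k\}$, where $s=|Q|$ and $k=|\Gamma|$. - Encode a pair $(q,a)$ by $p(q,a):=f(q)k+g(a)$. - Fix an integer base $B\ge(s+1)k+2$. - A digit string $d_1\cdots d_T$ in base $B$ denotes $\sum_{i=1}^T d_iB^{T-i}$. - For a configuration $C$ with state $q$, head position $h$ and tape $a_1\cdots a_T$, set $\langle C\rangle$ to be the digit string with $d_h=p(q,a_h)$ and $d_i=g(a_i)$ for $i\ne h$. Coin set $\mathcal{C}$ (with $B^{(-1)T}:=0$) consists of exactly the following three kinds of coins. (i) Copy coins. For $1\le i,j\le T$ and $a\in\Gamma$: $$c_{\mathrm{copy}}(a,i,j)=g(a)B^{T-i}\big(B^{(T-j)T}-B^{(T-j-1)T}\big).$$ (ii) Transition coins. For $2\le i\le T-1$, $1\le j\le T$, $q\in Q$, and $a^-,a,a^+\in\Gamma$: $$c_{\mathrm{transition}}(q,a^-,a,a^+,i,j)=u\,B^{(T-j)T}-v\,B^{(T-j-1)T},$$ where $u=g(a^-)B^{T-i+1}+p(q,a)B^{T-i}+g(a^+)B^{T-i-1}$ and $v$ is defined by cases: - if $q\notin F$ and $\delta(q,a)=(q',a',L)$: $v=p(q',a^-)B^{T-i+1}+g(a')B^{T-i}+g(a^+)B^{T-i-1}$; - if $q\notin F$ and $\delta(q,a)=(q',a',R)$: $v=g(a^-)B^{T-i+1}+g(a')B^{T-i}+p(q',a^+)B^{T-i-1}$;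 - if $q\in F$: $v=u$. (iii) Left-end transition coins. For $q\in Q\setminus F$, $a^+\in\Gamma$, and $1\le j\le T$, with $\delta(q,\$)=(q',\$,R)$: $$c^{\text{left-end}}_{\mathrm{transition}}(q,a^+,j)=\big(p(q,\$)B^{T-1}+g(a^+)B^{T-2}\big)B^{(T-j)T}-\big(g(\$)B^{T-1}+p(q',a^+)B^{T-2}\big)B^{(T-j-1)T}.$$ Greedy set of coin change with respect to $W$ and $\mathcal{C}$: start with $\mathcal{G}=\emptyset$ and remaining amount $W'=W$. Repeatedly select the largest coin $c\in\mathcal{C}$ with $c\le W'$, add $c$ to $\mathcal{G}$, and set $W'\gets W'-c$. *)

theory Defs
  imports Main "HOL-Library.Cardinality"
begin

datatype dir = L | R

text \<open>A configuration: (state, head position, tape). Tape cells are indexed from 1.\<close>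
type_synonym ('q, 'g) config = "'q \<times> nat \<times> (nat \<Rightarrow> 'g)"

definition tm_step ::
  "('q \<Rightarrow> 'g \<Rightarrow> 'q \<times> 'g \<times> dir) \<Rightarrow> 'q set \<Rightarrow> ('q, 'g) config \<Rightarrow> ('q, 'g) config" where
  "tm_step \<delta> F c = (case c of (q, h, a) \<Rightarrow>
     if q \<in> F then (q, h, a)
     else (case \<delta> q (a h) of (q', a', d) \<Rightarrow>
             (q', if d = L then h - 1 else h + 1, a(h := a'))))"

definition tm_run ::
  "('q \<Rightarrow> 'g \<Rightarrow> 'q \<times> 'g \<times> dir) \<Rightarrow> 'q set \<Rightarrow> ('q, 'g) config \<Rightarrow> nat \<Rightarrow> ('q, 'g) config" where
  "tm_run \<delta> F c t = (tm_step \<delta> F ^^ t) c"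

definition init_config :: "'q \<Rightarrow> 'g \<Rightarrow> 'g \<Rightarrow> 'g list \<Rightarrow> ('q, 'g) config" where
  "init_config q0 dollar blank x =
     (q0, 1, \<lambda>i. if i = 1 then dollar
                 else if 2 \<le> i \<and> i \<le> length x + 1 then x ! (i - 2) else blank)"

text \<open>Powers of the base with integer exponent; negative exponents give 0
  (this realises the convention B^((-1)T) := 0).\<close>
definition bpow :: "nat \<Rightarrow> int \<Rightarrow> int" where
  "bpow B e = (if e < 0 then 0 else int B ^ nat e)"

definition pcode :: "('q \<Rightarrow> nat) \<Rightarrow> ('g \<Rightarrow> nat) \<Rightarrow> nat \<Rightarrow> 'q \<Rightarrow> 'g \<Rightarrow> int" where
  "pcode f g k q a = int (f q * k + g a)"

definition encode ::
  "('q \<Rightarrow> nat) \<Rightarrow> ('g \<Rightarrow> nat) \<Rightarrow> nat \<Rightarrow> nat \<Rightarrow> nat \<Rightarrow> ('q, 'g) config \<Rightarrow> int" where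
  "encode f g k B T c = (case c of (q, h, a) \<Rightarrow>
     (\<Sum>i = 1..T. (if i = h then pcode f g k q (a i) else int (g (a i)))
                  * bpow B (int T - int i)))"

definition copy_coin :: "('g \<Rightarrow> nat) \<Rightarrow> nat \<Rightarrow> nat \<Rightarrow> 'g \<Rightarrow> nat \<Rightarrow> nat \<Rightarrow> int" where
  "copy_coin g B T a i j =
     int (g a) * bpow B (int T - int i)
       * (bpow B ((int T - int j) * int T) - bpow B ((int T - int j - 1) * int T))"

definition trans_coin ::
  "('q \<Rightarrow> 'g \<Rightarrow> 'q \<times> 'g \<times> dir) \<Rightarrow> 'q set \<Rightarrow> ('q \<Rightarrow> nat) \<Rightarrow> ('g \<Rightarrow> nat) \<Rightarrow> nat \<Rightarrow> nat \<Rightarrow> nat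
     \<Rightarrow> 'q \<Rightarrow> 'g \<Rightarrow> 'g \<Rightarrow> 'g \<Rightarrow> nat \<Rightarrow> nat \<Rightarrow> int" where
  "trans_coin \<delta> F f g k B T q am a ap i j =
     (let u = int (g am) * bpow B (int T - int i + 1)
              + pcode f g k q a * bpow B (int T - int i)
              + int (g ap) * bpow B (int T - int i - 1);
          v = (if q \<in> F then u
               else (case \<delta> q a of
                       (q', a', L) \<Rightarrow> pcode f g k q' am * bpow B (int T - int i + 1)
                                     + int (g a') * bpow B (int T - int i)
                                     + int (g ap) * bpow B (int T - int i - 1)
                     | (q', a', R) \<Rightarrow> int (g am) * bpow B (int T - int i + 1)
                                     + int (g a') * bpow B (int T - int i)
                                     + pcode f g k q' ap * bpow B (int T - int i - 1)))
      in u * bpow B ((int T - int j) * int T) - v * bpow B ((int T - int j - 1) * int T))"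

text \<open>Left-end transition coins (q' is the state with delta(q, dollar) = (q', dollar, R)).\<close>
definition leftend_coin ::
  "('q \<Rightarrow> 'g \<Rightarrow> 'q \<times> 'g \<times> dir) \<Rightarrow> ('q \<Rightarrow> nat) \<Rightarrow> ('g \<Rightarrow> nat) \<Rightarrow> nat \<Rightarrow> nat \<Rightarrow> nat
     \<Rightarrow> 'g \<Rightarrow> 'q \<Rightarrow> 'g \<Rightarrow> nat \<Rightarrow> int" where
  "leftend_coin \<delta> f g k B T dollar q ap j =
     (let q' = fst (\<delta> q dollar)
      in (pcode f g k q dollar * bpow B (int T - 1) + int (g ap) * bpow B (int T - 2))
           * bpow B ((int T - int j) * int T)
         - (int (g dollar) * bpow B (int T - 1) + pcode f g k q' ap * bpow B (int T - 2))
           * bpow B ((int T - int j - 1) * int T))"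

definition coin_set ::
  "('q \<Rightarrow> 'g \<Rightarrow> 'q \<times> 'g \<times> dir) \<Rightarrow> 'q set \<Rightarrow> ('q \<Rightarrow> nat) \<Rightarrow> ('g \<Rightarrow> nat) \<Rightarrow> nat \<Rightarrow> nat \<Rightarrow> nat
     \<Rightarrow> 'g \<Rightarrow> int set" where
  "coin_set \<delta> F f g k B T dollar =
     {copy_coin g B T a i j | a i j. 1 \<le> i \<and> i \<le> T \<and> 1 \<le> j \<and> j \<le> T}
   \<union> {trans_coin \<delta> F f g k B T q am a ap i j | q am a ap i j.
        2 \<le> i \<and> i \<le> T - 1 \<and> 1 \<le> j \<and> j \<le> T}
   \<union> {leftend_coin \<delta> f g k B T dollar q ap j | q ap j. q \<notin> F \<and> 1 \<le> j \<and> j \<le> T}"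

primrec greedy_rem :: "int set \<Rightarrow> int \<Rightarrow> nat \<Rightarrow> int" where
  "greedy_rem C W 0 = W"
| "greedy_rem C W (Suc t) =
     (if \<exists>c\<in>C. c \<le> greedy_rem C W t
      then greedy_rem C W t - Max {c \<in> C. c \<le> greedy_rem C W t}
      else greedy_rem C W t)"

definition greedy_set :: "int set \<Rightarrow> int \<Rightarrow> int set" where
  "greedy_set C W = {Max {c \<in> C. c \<le> greedy_rem C W t} | t. \<exists>c\<in>C. c \<le> greedy_rem C W t}"

end

theory Submission
  imports Defs
begin


definition sufs :: "int \<Rightarrow> nat \<Rightarrow> (nat \<Rightarrow> int) \<Rightarrow> nat \<Rightarrow> int" where
  "sufs b T d m = (\<Sum>i\<in>{m..T}. d i * b^(T-i))"
definition pres :: "int \<Rightarrow> nat \<Rightarrow> (nat \<Rightarrow> int) \<Rightarrow> nat \<Rightarrow> int" where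
  "pres b T d m = (\<Sum>i\<in>{1..<m}. d i * b^(T-i))"

lemma sufs_split: "m \<le> T \<Longrightarrow> sufs b T d m = d m * b^(T-m) + sufs b T d (Suc m)"
  unfolding sufs_def by (simp add: sum.atLeast_Suc_atMost)

lemma sufs_end: "T < m \<Longrightarrow> sufs b T d m = 0"
  unfolding sufs_def by simp

lemma pres_Suc: "1 \<le> m \<Longrightarrow> pres b T d (Suc m) = pres b T d m + d m * b^(T-m)"
  unfolding pres_def by (simp add: sum.atLeastLessThan_Suc)

lemma pres_1: "pres b T d 1 = 0"
  unfolding pres_def by simp

lemma pres_sufs: "1 \<le> m \<Longrightarrow> m \<le> Suc T \<Longrightarrow> pres b T d m + sufs b T d m = sufs b T d 1"
proof -
  assume a: "1 \<le> m" "m \<le> Suc T"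
  have "(\<Sum>i\<in>{1..<m}. d i * b^(T-i)) + (\<Sum>i\<in>{m..<Suc T}. d i * b^(T-i)) = (\<Sum>i\<in>{1..<Suc T}. d i * b^(T-i))"
    by (rule sum.atLeastLessThan_concat[OF a])
  then show ?thesis by (simp only: pres_def sufs_def atLeastLessThanSuc_atLeastAtMost)
qed

lemma sufs_lt:
  assumes "m \<le> Suc T" "\<And>i. m \<le> i \<Longrightarrow> i \<le> T \<Longrightarrow> 0 \<le> d i \<and> d i \<le> b - 1" "1 \<le> b"
  shows "0 \<le> sufs b T d m \<and> sufs b T d m < b^(Suc T - m)"
  using assms
proof (induction "Suc T - m" arbitrary: m)
  case 0
  then show ?case by (simp add: sufs_end)
next
  case (Suc n)
  then have mT: "m \<le> T" by simp
  have IH: "0 \<le> sufs b T d (Suc m) \<and> sufs b T d (Suc m) < b^(T - m)"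
    using Suc(1)[of "Suc m"] Suc(2-5) mT by simp
  have dm: "0 \<le> d m" "d m \<le> b - 1" using Suc(4)[of m] mT by auto
  have p: "0 < b^(T-m)" using Suc(5) by simp
  have "d m * b^(T-m) \<le> (b - 1) * b^(T-m)" using dm p by (intro mult_right_mono) auto
  moreover have "0 \<le> d m * b^(T-m)" using dm p by simp
  moreover have "b^(Suc T - m) = b * b^(T-m)" using mT by (simp add: Suc_diff_le)
  ultimately show ?case using sufs_split[OF mT, of b d] IH by (simp add: algebra_simps)
qed

lemma sufs_le2:
  assumes "1 \<le> m" "m \<le> T" "\<And>i. m \<le> i \<Longrightarrow> i \<le> T \<Longrightarrow> 0 \<le> d i \<and> d i \<le> b - 2" "2 \<le> b"
  shows "sufs b T d m \<le> b^(Suc T - m) - 2"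
  using assms
proof (induction "T - m" arbitrary: m)
  case 0
  then have "m = T" by simp
  then show ?case using sufs_split[of T T b d] 0 by (simp add: sufs_end)
next
  case (Suc n)
  then have mT: "m < T" by simp
  have IH: "sufs b T d (Suc m) \<le> b^(T - m) - 2"
    using Suc(1)[of "Suc m"] Suc(2-6) mT by simp
  have dm: "0 \<le> d m" "d m \<le> b - 2" using Suc(5)[of m] mT by auto
  have p: "0 < b^(T-m)" using Suc(6) by simp
  have "d m * b^(T-m) \<le> (b - 2) * b^(T-m)" using dm p by (intro mult_right_mono) auto
  moreover have "b^(Suc T - m) = b * b^(T-m)" using mT by (simp add: Suc_diff_le)
  moreover have "(b - 2) * b^(T-m) = b * b^(T-m) - 2 * b^(T-m)" by (simp add: algebra_simps)
  moreover have "sufs b T d m = d m * b^(T-m) + sufs b T d (Suc m)" using sufs_split[of m T b d] mT by simp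
  ultimately show ?case using IH p by linarith
qed

lemma pres_le:
  assumes "1 \<le> m" "m \<le> Suc T" "\<And>i. 1 \<le> i \<Longrightarrow> i \<le> T \<Longrightarrow> 0 \<le> d i \<and> d i \<le> b - 1" "1 \<le> b"
  shows "0 \<le> pres b T d m \<and> pres b T d m \<le> b^T - b^(Suc T - m)"
  using assms
proof (induction m)
  case 0
  then show ?case by simp
next
  case (Suc m)
  show ?case
  proof (cases "m = 0")
    case True
    then show ?thesis by (simp add: pres_def)
  next
    case False
    then have m1: "1 \<le> m" "m \<le> T" using Suc by auto
    have IH: "0 \<le> pres b T d m \<and> pres b T d m \<le> b^T - b^(Suc T - m)" using Suc m1 by simp
    have dm: "0 \<le> d m" "d m \<le> b - 1" using Suc(4)[of m] m1 by auto
    have p: "0 < b^(T-m)" using Suc(5) by simp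
    have "d m * b^(T-m) \<le> (b - 1) * b^(T-m)" using dm p by (intro mult_right_mono) auto
    moreover have "0 \<le> d m * b^(T-m)" using dm p by simp
    moreover have "b^(Suc T - m) = b * b^(T-m)" using m1 by (simp add: Suc_diff_le)
    moreover have "Suc T - Suc m = T - m" by simp
    ultimately show ?thesis using pres_Suc[OF m1(1), of b T d] IH by (simp add: algebra_simps)
  qed
qed

lemma mult_le_cancel_rem:
  fixes P x y r :: int
  assumes "0 < P" "0 \<le> r" "r < P" "P * x \<le> P * y + r"
  shows "x \<le> y"
proof (rule ccontr)
  assume "\<not> x \<le> y"
  then have "y + 1 \<le> x" by simp
  then have "P * (y + 1) \<le> P * x" using assms(1) by (intro mult_left_mono) auto
  then show False using assms by (simp add: algebra_simps)
qed

lemma digits2: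
  fixes b x0 x1 y0 y1 :: int
  assumes "0 \<le> x0" "x0 < b" "0 \<le> y0" "y0 < b" "x1 * b + x0 = y1 * b + y0"
  shows "x0 = y0 \<and> x1 = y1"
proof -
  have "(x1 * b + x0) mod b = x0 mod b" "(y1 * b + y0) mod b = y0 mod b" by simp_all
  moreover have "x0 mod b = x0" "y0 mod b = y0" using assms by (simp_all add: mod_pos_pos_trivial)
  ultimately have e: "x0 = y0" using assms(5) by metis
  then have "x1 * b = y1 * b" using assms(5) by simp
  then show ?thesis using e assms(2) assms(1) by auto
qed

lemma digits3:
  fixes b x0 x1 x2 y0 y1 y2 :: int
  assumes "0 \<le> x0" "x0 < b" "0 \<le> y0" "y0 < b" "0 \<le> x1" "x1 < b" "0 \<le> y1" "y1 < b"
    "x2 * b^2 + x1 * b + x0 = y2 * b^2 + y1 * b + y0"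
  shows "x0 = y0 \<and> x1 = y1 \<and> x2 = y2"
proof -
  have "(x2 * b + x1) * b + x0 = (y2 * b + y1) * b + y0" using assms(9) by (simp add: algebra_simps power2_eq_square)
  then have a: "x0 = y0" "x2 * b + x1 = y2 * b + y1" using digits2[OF assms(1-4)] by auto
  then show ?thesis using digits2[OF assms(5-8) a(2)] by auto
qed

lemma same_block:
  fixes Qs Qt Z v Bl E A u :: int
  assumes "Qs = 0 \<and> Qt = 1 \<or> 0 < Qs \<and> Qt = Z * Qs" "0 \<le> v" "v < Z" "0 \<le> Bl" "Bl + E \<le> Z"
    "A + 2 \<le> E" "u < E \<Longrightarrow> v < E" "u * Qt - v * Qs \<le> A * Qt + Bl * Qs" "0 \<le> A"
  shows "u \<le> A"
  using assms(1)
proof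
  assume "Qs = 0 \<and> Qt = 1" then show ?thesis using assms(8) by simp
next
  assume h: "0 < Qs \<and> Qt = Z * Qs"
  then have "Qs * (u * Z - v) \<le> Qs * (A * Z + Bl)" using assms(8) by (simp add: algebra_simps)
  then have ineq: "u * Z - v \<le> A * Z + Bl" using h by simp
  show ?thesis
  proof (rule ccontr)
    assume "\<not> u \<le> A"
    then consider "u = A + 1" | "A + 2 \<le> u" by linarith
    then show False
    proof cases
      case 1
      then have "v < E" using assms(6,7) by simp
      then show False using ineq 1 assms(5) by (simp add: algebra_simps)
    next
      case 2
      have "(A + 2) * Z \<le> u * Z" using 2 assms(3) assms(2) by (intro mult_right_mono) auto
      then show False using ineq assms(2-6) assms(9) by (simp add: algebra_simps)
    qed
  qed
qed

lemma R_lt: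
  fixes Qs Qt Z Bl A :: int
  assumes "Qs = 0 \<and> Qt = 1 \<or> 0 < Qs \<and> Qt = Z * Qs" "0 \<le> Bl" "Bl < Z"
  shows "A * Qt + Bl * Qs < (A + 1) * Qt"
  using assms(1)
proof
  assume "Qs = 0 \<and> Qt = 1" then show ?thesis by simp
next
  assume h: "0 < Qs \<and> Qt = Z * Qs"
  then have "Bl * Qs < Z * Qs" using assms(3) by simp
  then show ?thesis using h by (simp add: algebra_simps)
qed

lemma lower_block:
  fixes u v Z A Qt Qt' Qt'1 R :: int
  assumes "0 \<le> u" "0 \<le> v" "u * Z - v \<ge> Z - 1" "A \<le> Z - 2" "0 \<le> Qt" "Z * Qt \<le> Qt'" "Qt'1 \<le> Qt"
    "R < (A + 1) * Qt"
  shows "\<not> (u * Qt' - v * Qt'1 \<le> R)"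
proof -
  have a: "u * (Z * Qt) \<le> u * Qt'" using assms by (intro mult_left_mono) auto
  have b: "v * Qt'1 \<le> v * Qt" using assms by (intro mult_left_mono) auto
  have c: "(A + 1) * Qt \<le> (u * Z - v) * Qt" using assms by (intro mult_right_mono) auto
  show ?thesis using a b c assms(8) by (simp add: algebra_simps)
qed

lemma upper_block:
  fixes u v Z Qt' Qt'1 Qs Qt u0 v0 :: int
  assumes "0 \<le> u" "u \<le> Z - 1" "0 \<le> v" "0 \<le> Qt'1" "Qt' \<le> Qs" "Qt = Z * Qs" "u0 * Z - v0 \<ge> Z - 1" "0 \<le> Qs"
  shows "u * Qt' - v * Qt'1 \<le> u0 * Qt - v0 * Qs"
proof -
  have a: "u * Qt' \<le> u * Qs" using assms by (intro mult_left_mono) auto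
  have b: "u * Qs \<le> (Z - 1) * Qs" using assms by (intro mult_right_mono) auto
  have c: "(Z - 1) * Qs \<le> (u0 * Z - v0) * Qs" using assms by (intro mult_right_mono) auto
  have d: "0 \<le> v * Qt'1" using assms by simp
  show ?thesis using a b c d assms(6) by (simp add: algebra_simps)
qed

lemma smaller_u:
  fixes u v u0 v0 Qt Qs :: int
  assumes "u < u0" "0 \<le> v" "0 \<le> Qs" "0 \<le> Qt" "v0 * Qs \<le> Qt"
  shows "u * Qt - v * Qs \<le> u0 * Qt - v0 * Qs"
proof -
  have "u * Qt \<le> (u0 - 1) * Qt" using assms by (intro mult_right_mono) auto
  moreover have "0 \<le> v * Qs" using assms by simp
  ultimately show ?thesis using assms(5) by (simp add: algebra_simps)
qed

lemma three_lt:
  fixes b x y z :: int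
  assumes "0 \<le> x" "x \<le> b - 1" "0 \<le> y" "y \<le> b - 1" "0 \<le> z" "z \<le> b - 1" "1 \<le> b"
  shows "x * b^(Suc (Suc e)) + y * b^(Suc e) + z * b^e < b^(Suc (Suc (Suc e)))"
proof -
  have p: "0 < b^e" using assms by simp
  have "x * (b*b*b^e) \<le> (b - 1) * (b*b*b^e)" using assms p by (intro mult_right_mono) auto
  moreover have "y * (b*b^e) \<le> (b - 1) * (b*b^e)" using assms p by (intro mult_right_mono) auto
  moreover have "z * b^e \<le> (b - 1) * b^e" using assms p by (intro mult_right_mono) auto
  ultimately show ?thesis using p by (simp add: algebra_simps)
qed




locale sim =
  fixes \<delta> :: "'q::finite \<Rightarrow> 'g::finite \<Rightarrow> 'q \<times> 'g \<times> dir"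
    and q0 qacc qrej :: 'q and blank dollar :: 'g
    and f :: "'q \<Rightarrow> nat" and g :: "'g \<Rightarrow> nat" and B :: nat and x :: "'g list" and T :: nat
  assumes acc_rej: "qacc \<noteq> qrej"
    and dollar_blank: "dollar \<noteq> blank"
    and f_bij: "bij_betw f UNIV {1..CARD('q)}"
    and g_bij: "bij_betw g UNIV {1..CARD('g)}"
    and B_ge: "B \<ge> (CARD('q) + 1) * CARD('g) + 2"
    and left_end: "\<forall>q. q \<notin> {qacc, qrej} \<longrightarrow> (\<exists>q'. \<delta> q dollar = (q', dollar, R))"
    and T_ge: "T \<ge> 3"
    and halts: "\<exists>t < T. fst (tm_run \<delta> {qacc, qrej} (init_config q0 dollar blank x) t) \<in> {qacc, qrej}"
    and halt_shape: "\<forall>t. (case tm_run \<delta> {qacc, qrej} (init_config q0 dollar blank x) t of (q, h, a) \<Rightarrow>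
                         q \<in> {qacc, qrej} \<longrightarrow> h = 2 \<and> a 2 = blank \<and> a 3 = blank)"
begin

abbreviation "FF \<equiv> {qacc, qrej}"
definition "run t = tm_run \<delta> FF (init_config q0 dollar blank x) t"
definition "st t = fst (run t)"
definition "hp t = fst (snd (run t))"
definition "tp t = snd (snd (run t))"

lemma run_eq: "run t = (st t, hp t, tp t)"
  by (simp add: st_def hp_def tp_def)

lemma run_Suc: "run (Suc t) = tm_step \<delta> FF (run t)"
  by (simp add: run_def tm_run_def)

lemma run_0: "run 0 = init_config q0 dollar blank x"
  by (simp add: run_def tm_run_def)

lemma halted_Suc: "st t \<in> FF \<Longrightarrow> run (Suc t) = run t"
  using run_eq[of t] by (simp add: run_Suc tm_step_def)

lemma halted_stay: "st t \<in> FF \<Longrightarrow> run (t + n) = run t"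
  by (induction n) (auto simp: st_def halted_Suc)

lemma shape: "st t \<in> FF \<Longrightarrow> hp t = 2 \<and> tp t 2 = blank \<and> tp t 3 = blank"
  using halt_shape[rule_format, of t] run_eq[of t] unfolding run_def[symmetric] by auto

lemma step_nonhalt:
  assumes "st t \<notin> FF" "\<delta> (st t) (tp t (hp t)) = (q', a', d)"
  shows "st (Suc t) = q' \<and> hp (Suc t) = (if d = L then hp t - 1 else hp t + 1)
       \<and> tp (Suc t) = (tp t)(hp t := a')"
  using assms run_eq[of t] run_eq[of "Suc t"] by (simp add: run_Suc tm_step_def)

lemma basic_inv: "tp t 1 = dollar \<and> 1 \<le> hp t \<and> hp t \<le> t + 1"
proof (induction t)
  case 0
  then show ?case by (simp add: run_0 init_config_def tp_def hp_def)
next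
  case (Suc t)
  show ?case
  proof (cases "st t \<in> FF")
    case True
    then show ?thesis using Suc halted_Suc[of t] run_eq[of t] run_eq[of "Suc t"] by auto
  next
    case False
    obtain q' a' d where dd: "\<delta> (st t) (tp t (hp t)) = (q', a', d)" by (metis prod_cases3)
    note ns = step_nonhalt[OF False dd]
    show ?thesis
    proof (cases "hp t = 1")
      case True
      from left_end False obtain q'' where "\<delta> (st t) dollar = (q'', dollar, R)" by auto
      with dd True Suc have "a' = dollar" "d = R" by auto
      then show ?thesis using ns True by auto
    next
      case False
      then show ?thesis using ns Suc by auto
    qed
  qed
qed

lemma halt_time: obtains th where "th < T" "st th \<in> FF"
  using halts unfolding run_def[symmetric] st_def[symmetric] by auto

lemma halted_after: assumes "th \<le> t" "st th \<in> FF" shows "run t = run th"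
  using halted_stay[OF assms(2), of "t - th"] assms(1) by simp

lemma hp_bounds: "1 \<le> hp t \<and> hp t \<le> T - 1"
proof -
  obtain th where th: "th < T" "st th \<in> FF" by (rule halt_time)
  show ?thesis
  proof (cases "th \<le> t")
    case True
    then have "hp t = hp th" using halted_after[OF True th(2)] by (simp add: hp_def)
    then show ?thesis using shape[OF th(2)] T_ge by simp
  next
    case False
    then show ?thesis using basic_inv[of t] th by auto
  qed
qed

lemma final_halted: "st (T - 1) \<in> FF"
proof -
  obtain th where th: "th < T" "st th \<in> FF" by (rule halt_time)
  then have "run (T - 1) = run th" by (intro halted_after) auto
  then show ?thesis using th by (simp add: st_def)
qed

lemma accept_iff: "(\<exists>t. st t = qacc) \<longleftrightarrow> st (T - 1) = qacc"
proof
  assume "\<exists>t. st t = qacc"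
  then obtain t where t: "st t = qacc" by blast
  obtain th where th: "th < T" "st th \<in> FF" by (rule halt_time)
  show "st (T - 1) = qacc"
  proof (cases "t \<le> T - 1")
    case True
    then have "run (T - 1) = run t" using t by (intro halted_after) auto
    then show ?thesis using t by (simp add: st_def)
  next
    case False
    then have "run t = run th" "run (T - 1) = run th" using th by (auto intro: halted_after)
    then show ?thesis using t by (simp add: st_def)
  qed
qed auto

end



context sim
begin

abbreviation "b \<equiv> int B"
abbreviation "Z \<equiv> b ^ T"

lemma g_rng: "1 \<le> g a \<and> g a \<le> CARD('g)" using bij_betw_apply[OF g_bij, of a] by auto
lemma f_rng: "1 \<le> f q \<and> f q \<le> CARD('q)" using bij_betw_apply[OF f_bij, of q] by auto
lemma g_inj: "g a = g a' \<Longrightarrow> a = a'" using bij_betw_imp_inj_on[OF g_bij] by (auto dest: injD)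
lemma f_inj: "f q = f q' \<Longrightarrow> q = q'" using bij_betw_imp_inj_on[OF f_bij] by (auto dest: injD)

lemma k2: "2 \<le> CARD('g)"
proof -
  have "card {dollar, blank} \<le> CARD('g)" by (rule card_mono) auto
  then show ?thesis using dollar_blank by simp
qed

lemma s2: "2 \<le> CARD('q)"
proof -
  have "card {qacc, qrej} \<le> CARD('q)" by (rule card_mono) auto
  then show ?thesis using acc_rej by simp
qed

lemma Bk: "(CARD('q) + 1) * CARD('g) + 2 \<le> B" using B_ge by simp

lemma sk_ge: "CARD('g) + CARD('g) \<le> (CARD('q) + 1) * CARD('g)"
proof -
  have "2 * CARD('g) \<le> (CARD('q) + 1) * CARD('g)" using s2 by (intro mult_right_mono) auto
  then show ?thesis by simp
qed

lemma B8: "8 \<le> B"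
proof -
  have "3 * CARD('g) \<le> (CARD('q) + 1) * CARD('g)" using s2 by (intro mult_right_mono) auto
  then show ?thesis using Bk k2 by linarith
qed

abbreviation pc where "pc q a \<equiv> pcode f g CARD('g) q a"

lemma pc_rng: "int CARD('g) + 1 \<le> pc q a \<and> pc q a \<le> b - 2"
proof -
  have "1 * CARD('g) \<le> f q * CARD('g)" using f_rng[of q] by (intro mult_right_mono) auto
  moreover have "f q * CARD('g) \<le> CARD('q) * CARD('g)" using f_rng[of q] by (intro mult_right_mono) auto
  moreover have "(CARD('q)+1)*CARD('g) = CARD('q)*CARD('g) + CARD('g)" by simp
  ultimately have n: "CARD('g) + 1 \<le> f q * CARD('g) + g a" "f q * CARD('g) + g a + 2 \<le> B"
    using g_rng[of a] Bk by linarith+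
  then have "int (CARD('g) + 1) \<le> int (f q * CARD('g) + g a)" "int (f q * CARD('g) + g a + 2) \<le> int B"
    by (simp_all only: of_nat_le_iff)
  then show ?thesis by (simp add: pcode_def)
qed

lemma pc_inj: assumes "pc q a = pc q' a'" shows "q = q' \<and> a = a'"
proof -
  have "int (f q * CARD('g) + g a) = int (f q' * CARD('g) + g a')" using assms by (simp only: pcode_def)
  then have e: "f q * CARD('g) + g a = f q' * CARD('g) + g a'" by (simp only: of_nat_eq_iff)
  have "f q = f q'"
  proof (rule ccontr)
    assume "f q \<noteq> f q'"
    then consider "f q + 1 \<le> f q'" | "f q' + 1 \<le> f q" by linarith
    then show False
    proof cases
      case 1
      then have "(f q + 1) * CARD('g) \<le> f q' * CARD('g)" by (intro mult_right_mono) auto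
      then show False using e g_rng[of a] g_rng[of a'] by (simp add: algebra_simps)
    next
      case 2
      then have "(f q' + 1) * CARD('g) \<le> f q * CARD('g)" by (intro mult_right_mono) auto
      then show False using e g_rng[of a] g_rng[of a'] by (simp add: algebra_simps)
    qed
  qed
  then show ?thesis using e f_inj g_inj by auto
qed

lemma k_le_b: "int CARD('g) \<le> b - 2" using Bk sk_ge by linarith

definition D where "D t i = (if i = hp t then pc (st t) (tp t i) else int (g (tp t i)))"

lemma D_rng: "1 \<le> D t i \<and> D t i \<le> b - 2"
  using pc_rng[of "st t" "tp t i"] g_rng[of "tp t i"] k_le_b by (auto simp: D_def)

lemma D_far: "i \<noteq> hp t \<Longrightarrow> D t i = int (g (tp t i))"
  by (simp add: D_def)

lemma D_hd: "D t (hp t) = pc (st t) (tp t (hp t))"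
  by (simp add: D_def)

definition Q where "Q t = (if t < T then b ^ ((T - 1 - t) * T) else 0)"

lemma b_pos: "1 < b" using B8 by simp

lemma Q_pos: "t < T \<Longrightarrow> 0 < Q t" using b_pos by (simp add: Q_def)
lemma Q_nonneg: "0 \<le> Q t" using b_pos by (simp add: Q_def)
lemma Q_last: "Q (T - 1) = 1" using T_ge by (simp add: Q_def)
lemma Q_T: "Q T = 0" by (simp add: Q_def)

lemma Q_Suc: assumes "Suc t < T" shows "Q t = Z * Q (Suc t)"
proof -
  have "T - 1 - t = Suc (T - 1 - Suc t)" using assms by arith
  then have "(T - 1 - t) * T = T + (T - 1 - Suc t) * T" by simp
  then show ?thesis using assms by (simp add: Q_def power_add)
qed

lemma Q_mono: assumes "t' \<le> t" shows "Q t \<le> Q t'"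
proof (cases "t < T")
  case True
  then have "b ^ ((T - 1 - t) * T) \<le> b ^ ((T - 1 - t') * T)"
    using assms b_pos by (intro power_increasing) (auto intro: mult_right_mono)
  then show ?thesis using True assms by (simp add: Q_def)
next
  case False
  then show ?thesis using Q_nonneg by (simp add: Q_def)
qed

lemma Q_ge: assumes "t' < t" "t < T" shows "Z * Q t \<le> Q t'"
proof -
  obtain r where r: "t = Suc r" using assms by (cases t) auto
  then have "Q r = Z * Q t" using Q_Suc assms by simp
  moreover have "Q r \<le> Q t'" using Q_mono r assms by simp
  ultimately show ?thesis by simp
qed

lemma Q_rel: assumes "t < T"
  shows "(Q (Suc t) = 0 \<and> Q t = 1) \<or> (0 < Q (Suc t) \<and> Q t = Z * Q (Suc t))"
proof (cases "Suc t < T")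
  case True
  then show ?thesis using Q_Suc Q_pos by auto
next
  case False
  then have "t = T - 1" "Suc t = T" using assms by auto
  then show ?thesis using Q_last Q_T by auto
qed

abbreviation "suf t m \<equiv> sufs b T (D t) m"
abbreviation "pre t m \<equiv> pres b T (D t) m"

definition RR where "RR t m = suf t m * Q t + pre (Suc t) m * Q (Suc t)"

lemma D_rng1: "0 \<le> D t i \<and> D t i \<le> b - 1" using D_rng[of t i] by linarith
lemma D_rng2: "0 \<le> D t i \<and> D t i \<le> b - 2" using D_rng[of t i] by linarith

lemma D_lt: "D t i < b" and D_ge0: "0 \<le> D t i" using D_rng[of t i] by linarith+
lemma B1: "Suc 0 \<le> B" using B8 by simp

lemma suf_lt: "m \<le> Suc T \<Longrightarrow> 0 \<le> suf t m \<and> suf t m < b ^ (Suc T - m)"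
  by (rule sufs_lt) (auto simp: D_lt D_ge0 B1 less_imp_le)

lemma suf_le2: "1 \<le> m \<Longrightarrow> m \<le> T \<Longrightarrow> suf t m \<le> b ^ (Suc T - m) - 2"
  using b_pos by (rule_tac sufs_le2) (simp_all add: D_rng2)

lemma pre_le: "1 \<le> m \<Longrightarrow> m \<le> Suc T \<Longrightarrow> 0 \<le> pre t m \<and> pre t m \<le> Z - b ^ (Suc T - m)"
  by (rule pres_le) (auto simp: D_lt D_ge0 B1 less_imp_le)

lemma bpow_nat: "bpow B (int n) = b ^ n" by (simp add: bpow_def)

lemma bpow_Qa: assumes "1 \<le> j" "j \<le> T" shows "bpow B ((int T - int j) * int T) = Q (j - 1)"
proof -
  have "(int T - int j) * int T = int ((T - j) * T)" using assms by (simp add: of_nat_diff)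
  moreover have "T - 1 - (j - 1) = T - j" using assms by simp
  ultimately have "bpow B ((int T - int j) * int T) = b ^ ((T - 1 - (j - 1)) * T)" by (simp only: bpow_nat)
  then show ?thesis using assms by (simp add: Q_def)
qed

lemma bpow_Qb: assumes "1 \<le> j" "j \<le> T" shows "bpow B ((int T - int j - 1) * int T) = Q j"
proof (cases "j < T")
  case True
  then have "(int T - int j - 1) * int T = int ((T - 1 - j) * T)" by (simp add: of_nat_diff)
  then have "bpow B ((int T - int j - 1) * int T) = b ^ ((T - 1 - j) * T)" by (simp only: bpow_nat)
  then show ?thesis using True by (simp add: Q_def)
next
  case False
  then have "j = T" using assms by simp
  then show ?thesis using T_ge by (simp add: bpow_def Q_def)
qed

lemma bpow_e: "i \<le> T \<Longrightarrow> bpow B (int T - int i) = b ^ (T - i)"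
  by (simp add: bpow_def nat_diff_distrib)

definition cu where "cu a i = int (g a) * b ^ (T - i)"
definition tu where "tu q am a ap i = int (g am) * b ^ (Suc (Suc (T - i - 1))) + pc q a * b ^ (Suc (T - i - 1)) + int (g ap) * b ^ (T - i - 1)"
definition tv where "tv q am a ap i = (if q \<in> FF then tu q am a ap i else (case \<delta> q a of
    (q', a', L) \<Rightarrow> pc q' am * b ^ (Suc (Suc (T - i - 1))) + int (g a') * b ^ (Suc (T - i - 1)) + int (g ap) * b ^ (T - i - 1)
  | (q', a', R) \<Rightarrow> int (g am) * b ^ (Suc (Suc (T - i - 1))) + int (g a') * b ^ (Suc (T - i - 1)) + pc q' ap * b ^ (T - i - 1)))"
definition lu where "lu q ap = pc q dollar * b ^ (Suc (T - 2)) + int (g ap) * b ^ (T - 2)"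
definition lv where "lv q ap = int (g dollar) * b ^ (Suc (T - 2)) + pc (fst (\<delta> q dollar)) ap * b ^ (T - 2)"

lemma copy_eq: assumes "1 \<le> i" "i \<le> T" "1 \<le> j" "j \<le> T"
  shows "copy_coin g B T a i j = cu a i * Q (j - 1) - cu a i * Q j"
  unfolding copy_coin_def bpow_Qa[OF assms(3,4)] bpow_Qb[OF assms(3,4)] bpow_e[OF assms(2)] cu_def
  by (simp add: algebra_simps)

lemma trans_eq: assumes "2 \<le> i" "i \<le> T - 1" "1 \<le> j" "j \<le> T"
  shows "trans_coin \<delta> FF f g CARD('g) B T q am a ap i j = tu q am a ap i * Q (j - 1) - tv q am a ap i * Q j"
proof -
  have "int T - int i + 1 = int (Suc (Suc (T - i - 1)))" using assms by linarith
  then have e1: "bpow B (int T - int i + 1) = b ^ (Suc (Suc (T - i - 1)))"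
    by (simp only: bpow_nat)
  have e2: "bpow B (int T - int i) = b ^ (Suc (T - i - 1))" using assms
    by (subst bpow_e) (auto simp: Suc_diff_Suc)
  have e3: "bpow B (int T - int i - 1) = b ^ (T - i - 1)" using assms
    by (simp add: bpow_def nat_diff_distrib)
  show ?thesis
    unfolding trans_coin_def Let_def tv_def tu_def e1 e2 e3 bpow_Qa[OF assms(3,4)] bpow_Qb[OF assms(3,4)]
    by (auto split: prod.splits dir.splits)
qed

lemma left_eq: assumes "1 \<le> j" "j \<le> T"
  shows "leftend_coin \<delta> f g CARD('g) B T dollar q ap j = lu q ap * Q (j - 1) - lv q ap * Q j"
proof -
  have "int T - 1 = int (Suc (T - 2))" using T_ge by linarith
  then have e1: "bpow B (int T - 1) = b ^ (Suc (T - 2))" by (simp only: bpow_nat)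
  have e2: "bpow B (int T - 2) = b ^ (T - 2)" using T_ge by (simp add: bpow_def nat_diff_distrib)
  show ?thesis unfolding leftend_coin_def Let_def e1 e2 bpow_Qa[OF assms] bpow_Qb[OF assms] lu_def lv_def
    by simp
qed

end



lemma two_lt:
  fixes b y z :: int
  assumes "0 \<le> y" "y \<le> b - 1" "0 \<le> z" "z \<le> b - 1" "1 \<le> b"
  shows "y * b^(Suc e) + z * b^e < b^(Suc (Suc e))"
proof -
  have p: "0 < b^e" using assms by simp
  have "y * (b*b^e) \<le> (b - 1) * (b*b^e)" using assms p by (intro mult_right_mono) auto
  moreover have "z * b^e \<le> (b - 1) * b^e" using assms p by (intro mult_right_mono) auto
  ultimately show ?thesis using p by (simp add: algebra_simps)
qed

context sim
begin

abbreviation "CC \<equiv> coin_set \<delta> FF f g CARD('g) B T dollar"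

lemma copy_in: assumes "1 \<le> i" "i \<le> T" "t < T"
  shows "cu a i * Q t - cu a i * Q (Suc t) \<in> CC"
proof -
  have "copy_coin g B T a i (Suc t) = cu a i * Q t - cu a i * Q (Suc t)"
    using copy_eq[of i "Suc t" a] assms by simp
  moreover have "copy_coin g B T a i (Suc t) \<in> CC" unfolding coin_set_def
    by (rule UnI1, rule UnI1, rule CollectI, rule exI[of _ a], rule exI[of _ i], rule exI[of _ "Suc t"]) (use assms in simp)
  ultimately show ?thesis by simp
qed

lemma trans_in: assumes "2 \<le> i" "i \<le> T - 1" "t < T"
  shows "tu q am a ap i * Q t - tv q am a ap i * Q (Suc t) \<in> CC"
proof -
  have "trans_coin \<delta> FF f g CARD('g) B T q am a ap i (Suc t) = tu q am a ap i * Q t - tv q am a ap i * Q (Suc t)"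
    using trans_eq[of i "Suc t"] assms by simp
  moreover have "trans_coin \<delta> FF f g CARD('g) B T q am a ap i (Suc t) \<in> CC" unfolding coin_set_def
    by (rule UnI1, rule UnI2, rule CollectI, rule exI[of _ q], rule exI[of _ am], rule exI[of _ a], rule exI[of _ ap], rule exI[of _ i], rule exI[of _ "Suc t"]) (use assms in simp)
  ultimately show ?thesis by simp
qed

lemma left_in: assumes "q \<notin> FF" "t < T"
  shows "lu q ap * Q t - lv q ap * Q (Suc t) \<in> CC"
proof -
  have "leftend_coin \<delta> f g CARD('g) B T dollar q ap (Suc t) = lu q ap * Q t - lv q ap * Q (Suc t)"
    using left_eq[of "Suc t"] assms by simp
  moreover have "leftend_coin \<delta> f g CARD('g) B T dollar q ap (Suc t) \<in> CC" unfolding coin_set_def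
    by (rule UnI2, rule CollectI, rule exI[of _ q], rule exI[of _ ap], rule exI[of _ "Suc t"]) (use assms in simp)
  ultimately show ?thesis by simp
qed

lemma C_cases:
  assumes "c \<in> CC"
  shows "(\<exists>a i t. 1 \<le> i \<and> i \<le> T \<and> t < T \<and> c = cu a i * Q t - cu a i * Q (Suc t))
    \<or> (\<exists>q am a ap i t. 2 \<le> i \<and> i \<le> T - 1 \<and> t < T \<and> c = tu q am a ap i * Q t - tv q am a ap i * Q (Suc t))
    \<or> (\<exists>q ap t. q \<notin> FF \<and> t < T \<and> c = lu q ap * Q t - lv q ap * Q (Suc t))"
proof -
  from assms consider
    (1) a i j where "1 \<le> i" "i \<le> T" "1 \<le> j" "j \<le> T" "c = copy_coin g B T a i j"
  | (2) q am a ap i j where "2 \<le> i" "i \<le> T - 1" "1 \<le> j" "j \<le> T" "c = trans_coin \<delta> FF f g CARD('g) B T q am a ap i j"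
  | (3) q ap j where "q \<notin> FF" "1 \<le> j" "j \<le> T" "c = leftend_coin \<delta> f g CARD('g) B T dollar q ap j"
    unfolding coin_set_def by blast
  then show ?thesis
  proof cases
    case 1
    then have "c = cu a i * Q (j - 1) - cu a i * Q (Suc (j - 1))" using copy_eq by simp
    then show ?thesis using 1 by (intro disjI1 exI[of _ a] exI[of _ i] exI[of _ "j - 1"]) auto
  next
    case 2
    then have "c = tu q am a ap i * Q (j - 1) - tv q am a ap i * Q (Suc (j - 1))" using trans_eq by simp
    then show ?thesis using 2 by (intro disjI2 disjI1 exI[of _ q] exI[of _ am] exI[of _ a] exI[of _ ap] exI[of _ i] exI[of _ "j - 1"]) auto
  next
    case 3
    then have "c = lu q ap * Q (j - 1) - lv q ap * Q (Suc (j - 1))" using left_eq by simp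
    then show ?thesis using 3 by (intro disjI2 disjI2 exI[of _ q] exI[of _ ap] exI[of _ "j - 1"]) auto
  qed
qed

lemma C_finite: "finite CC"
proof -
  have 1: "{copy_coin g B T a i j |a i j. 1 \<le> i \<and> i \<le> T \<and> 1 \<le> j \<and> j \<le> T}
      \<subseteq> (\<lambda>(a,i,j). copy_coin g B T a i j) ` (UNIV \<times> {..T} \<times> {..T})"
  proof
    fix c assume "c \<in> {copy_coin g B T a i j |a i j. 1 \<le> i \<and> i \<le> T \<and> 1 \<le> j \<and> j \<le> T}"
    then obtain a i j where "c = copy_coin g B T a i j" "i \<le> T" "j \<le> T" by blast
    then show "c \<in> (\<lambda>(a,i,j). copy_coin g B T a i j) ` (UNIV \<times> {..T} \<times> {..T})"
      by (intro image_eqI[of _ _ "(a,i,j)"]) auto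
  qed
  have 2: "{trans_coin \<delta> FF f g CARD('g) B T q am a ap i j |q am a ap i j. 2 \<le> i \<and> i \<le> T - 1 \<and> 1 \<le> j \<and> j \<le> T}
      \<subseteq> (\<lambda>(q,am,a,ap,i,j). trans_coin \<delta> FF f g CARD('g) B T q am a ap i j) ` (UNIV \<times> UNIV \<times> UNIV \<times> UNIV \<times> {..T} \<times> {..T})"
  proof
    fix c assume "c \<in> {trans_coin \<delta> FF f g CARD('g) B T q am a ap i j |q am a ap i j. 2 \<le> i \<and> i \<le> T - 1 \<and> 1 \<le> j \<and> j \<le> T}"
    then obtain q am a ap i j where "c = trans_coin \<delta> FF f g CARD('g) B T q am a ap i j" "i \<le> T" "j \<le> T" by auto
    then show "c \<in> (\<lambda>(q,am,a,ap,i,j). trans_coin \<delta> FF f g CARD('g) B T q am a ap i j) ` (UNIV \<times> UNIV \<times> UNIV \<times> UNIV \<times> {..T} \<times> {..T})"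
      by (intro image_eqI[of _ _ "(q,am,a,ap,i,j)"]) auto
  qed
  have 3: "{leftend_coin \<delta> f g CARD('g) B T dollar q ap j |q ap j. q \<notin> FF \<and> 1 \<le> j \<and> j \<le> T}
      \<subseteq> (\<lambda>(q,ap,j). leftend_coin \<delta> f g CARD('g) B T dollar q ap j) ` (UNIV \<times> UNIV \<times> {..T})"
  proof
    fix c assume "c \<in> {leftend_coin \<delta> f g CARD('g) B T dollar q ap j |q ap j. q \<notin> FF \<and> 1 \<le> j \<and> j \<le> T}"
    then obtain q ap j where "c = leftend_coin \<delta> f g CARD('g) B T dollar q ap j" "j \<le> T" by blast
    then show "c \<in> (\<lambda>(q,ap,j). leftend_coin \<delta> f g CARD('g) B T dollar q ap j) ` (UNIV \<times> UNIV \<times> {..T})"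
      by (intro image_eqI[of _ _ "(q,ap,j)"]) auto
  qed
  have "finite (UNIV \<times> {..T} \<times> {..T} :: ('g \<times> nat \<times> nat) set)" by simp
  moreover have "finite (UNIV \<times> UNIV \<times> UNIV \<times> UNIV \<times> {..T} \<times> {..T} :: ('q \<times> 'g \<times> 'g \<times> 'g \<times> nat \<times> nat) set)" by simp
  moreover have "finite (UNIV \<times> UNIV \<times> {..T} :: ('q \<times> 'g \<times> nat) set)" by simp
  ultimately show ?thesis unfolding coin_set_def using finite_subset[OF 1] finite_subset[OF 2] finite_subset[OF 3]
    by blast
qed

definition cprops where "cprops u v \<longleftrightarrow> 1 \<le> u \<and> u \<le> Z - 1 \<and> 0 \<le> v \<and> v < Z \<and> Z - 1 \<le> u * Z - v
   \<and> (\<forall>e. u < b ^ e \<longrightarrow> v < b ^ e)"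

lemma g_lt: "int (g a) \<le> b - 1" "0 \<le> int (g a)" using g_rng[of a] k_le_b by auto
lemma pc_lt: "pc q a \<le> b - 1" "0 \<le> pc q a" using pc_rng[of q a] by auto

lemma Z_ge: "b ^ n \<le> Z" if "n \<le> T" using that b_pos by (intro power_increasing) auto

lemma cu_props: assumes "1 \<le> i" "i \<le> T" shows "cprops (cu a i) (cu a i)"
proof -
  have p: "1 \<le> b ^ (T - i)" using b_pos by simp
  have g1: "1 \<le> int (g a)" using g_rng[of a] by simp
  have "1 * 1 \<le> int (g a) * b ^ (T - i)" using p g1 by (intro mult_mono) auto
  then have u1: "1 \<le> cu a i" by (simp add: cu_def)
  have "cu a i < b ^ Suc (T - i)" using two_lt[of 0 b "int (g a)" "T - i"] g_lt b_pos by (simp add: cu_def)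
  moreover have "b ^ Suc (T - i) \<le> Z" using assms by (intro Z_ge) auto
  ultimately have u2: "cu a i < Z" by simp
  have "0 \<le> (cu a i - 1) * (Z - 1)" using u1 u2 by (intro mult_nonneg_nonneg) linarith+
  then have "Z - 1 \<le> cu a i * Z - cu a i" by (simp add: algebra_simps)
  then show ?thesis using u1 u2 B8 unfolding cprops_def by simp
qed

lemma exp_mono_lt: assumes "b ^ n \<le> u" "u < b ^ e" "n < m" "(\<And>e. n < e \<Longrightarrow> m \<le> e)"
  shows "b ^ m \<le> b ^ e"
proof -
  have "b ^ n < b ^ e" using assms by simp
  then have "n < e" using b_pos power_less_imp_less_exp by blast
  then show ?thesis using assms(4) b_pos by (intro power_increasing) auto
qed

lemma tu_props: assumes "2 \<le> i" "i \<le> T - 1" shows "cprops (tu q am a ap i) (tv q am a ap i)"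
proof -
  define e where "e = T - i - 1"
  have eT: "Suc (Suc (Suc e)) \<le> T" using assms T_ge by (simp add: e_def)
  have tu_e: "tu q am a ap i = int (g am) * b ^ (Suc (Suc e)) + pc q a * b ^ (Suc e) + int (g ap) * b ^ e"
    by (simp add: tu_def e_def)
  have lo: "b ^ Suc (Suc e) \<le> tu q am a ap i"
  proof -
    have "1 * b ^ Suc (Suc e) \<le> int (g am) * b ^ Suc (Suc e)" using g_rng[of am] b_pos by (intro mult_right_mono) auto
    moreover have "0 \<le> pc q a * b ^ (Suc e)" "0 \<le> int (g ap) * b ^ e" using pc_lt g_lt b_pos by simp_all
    ultimately show ?thesis using tu_e by linarith
  qed
  have hi: "tu q am a ap i < b ^ Suc (Suc (Suc e))" using three_lt[of "int (g am)" b "pc q a" "int (g ap)" e] g_lt pc_lt b_pos tu_e by simp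
  have tvb: "0 \<le> tv q am a ap i \<and> tv q am a ap i < b ^ Suc (Suc (Suc e))"
  proof (cases "q \<in> FF")
    case True
    then have "tv q am a ap i = tu q am a ap i" by (simp add: tv_def)
    moreover have "0 < b ^ Suc (Suc e)" using b_pos by simp
    ultimately show ?thesis using lo hi by linarith
  next
    case False
    obtain q' a' d where dd: "\<delta> q a = (q', a', d)" by (metis prod_cases3)
    show ?thesis
    proof (cases d)
      case L
      then have "tv q am a ap i = pc q' am * b ^ Suc (Suc e) + int (g a') * b ^ Suc e + int (g ap) * b ^ e"
        using False dd by (simp add: tv_def e_def)
      moreover have "0 \<le> pc q' am * b ^ Suc (Suc e)" "0 \<le> int (g a') * b ^ Suc e" "0 \<le> int (g ap) * b ^ e"
        using g_lt pc_lt b_pos by simp_all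
      moreover have "pc q' am * b ^ Suc (Suc e) + int (g a') * b ^ Suc e + int (g ap) * b ^ e < b ^ Suc (Suc (Suc e))"
        by (rule three_lt) (use g_lt pc_lt b_pos in auto)
      ultimately show ?thesis by linarith
    next
      case R
      then have "tv q am a ap i = int (g am) * b ^ Suc (Suc e) + int (g a') * b ^ Suc e + pc q' ap * b ^ e"
        using False dd by (simp add: tv_def e_def)
      moreover have "0 \<le> int (g am) * b ^ Suc (Suc e)" "0 \<le> int (g a') * b ^ Suc e" "0 \<le> pc q' ap * b ^ e"
        using g_lt pc_lt b_pos by simp_all
      moreover have "int (g am) * b ^ Suc (Suc e) + int (g a') * b ^ Suc e + pc q' ap * b ^ e < b ^ Suc (Suc (Suc e))"
        by (rule three_lt) (use g_lt pc_lt b_pos in auto)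
      ultimately show ?thesis by linarith
    qed
  qed
  have Zb: "b ^ Suc (Suc (Suc e)) \<le> Z" using eT by (rule Z_ge)
  have b2: "2 \<le> b ^ Suc (Suc e)"
  proof -
    have "b ^ 1 \<le> b ^ Suc (Suc e)" using b_pos by (intro power_increasing) auto
    then have "b \<le> b ^ Suc (Suc e)" by (simp only: power_one_right)
    then show ?thesis using b_pos by linarith
  qed
  have "2 * Z \<le> tu q am a ap i * Z" using lo b2 b_pos by (intro mult_right_mono) auto
  then have "Z - 1 \<le> tu q am a ap i * Z - tv q am a ap i" using tvb hi Zb by linarith
  moreover have "\<forall>e'. tu q am a ap i < b ^ e' \<longrightarrow> tv q am a ap i < b ^ e'"
  proof (intro allI impI)
    fix e' assume "tu q am a ap i < b ^ e'"
    then have "b ^ Suc (Suc (Suc e)) \<le> b ^ e'" using lo by (intro exp_mono_lt[where n="Suc (Suc e)"]) auto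
    then show "tv q am a ap i < b ^ e'" using tvb by simp
  qed
  ultimately show ?thesis using lo hi b2 tvb Zb unfolding cprops_def by auto
qed

lemma lu_props: shows "cprops (lu q ap) (lv q ap)"
proof -
  define e where "e = T - 2"
  have eT: "Suc (Suc e) = T" using T_ge by (simp add: e_def)
  have lo: "b ^ Suc e \<le> lu q ap"
  proof -
    have "1 * b ^ Suc e \<le> pc q dollar * b ^ Suc e" using pc_rng[of q dollar] b_pos by (intro mult_right_mono) auto
    moreover have "0 \<le> int (g ap) * b ^ e" using g_lt b_pos by simp
    moreover have "lu q ap = pc q dollar * b ^ Suc e + int (g ap) * b ^ e" by (simp add: lu_def e_def)
    ultimately show ?thesis by linarith
  qed
  have h1: "pc q dollar * b ^ Suc e + int (g ap) * b ^ e < b ^ Suc (Suc e)"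
    by (rule two_lt) (use g_lt pc_lt b_pos in auto)
  have lu_eq: "lu q ap = pc q dollar * b ^ Suc e + int (g ap) * b ^ e" by (simp add: lu_def e_def)
  have hi: "lu q ap < Z" using h1 unfolding lu_eq[symmetric] eT .
  have h2: "int (g dollar) * b ^ Suc e + pc (fst (\<delta> q dollar)) ap * b ^ e < b ^ Suc (Suc e)"
    by (rule two_lt) (use g_lt pc_lt b_pos in auto)
  have lv_eq: "lv q ap = int (g dollar) * b ^ Suc e + pc (fst (\<delta> q dollar)) ap * b ^ e" by (simp add: lv_def e_def)
  have "0 \<le> int (g dollar) * b ^ Suc e" "0 \<le> pc (fst (\<delta> q dollar)) ap * b ^ e" using g_lt pc_lt b_pos by simp_all
  then have "0 \<le> lv q ap" using lv_eq by linarith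
  moreover have "lv q ap < Z" using h2 unfolding lv_eq[symmetric] eT .
  ultimately have lvb: "0 \<le> lv q ap \<and> lv q ap < Z" by simp
  have b2: "2 \<le> b ^ Suc e"
  proof -
    have "b ^ 1 \<le> b ^ Suc e" using b_pos by (intro power_increasing) auto
    then have "b \<le> b ^ Suc e" by (simp only: power_one_right)
    then show ?thesis using b_pos by linarith
  qed
  have "2 * Z \<le> lu q ap * Z" using lo b2 b_pos by (intro mult_right_mono) auto
  then have "Z - 1 \<le> lu q ap * Z - lv q ap" using lvb by linarith
  moreover have "\<forall>e'. lu q ap < b ^ e' \<longrightarrow> lv q ap < b ^ e'"
  proof (intro allI impI)
    fix e' assume "lu q ap < b ^ e'"
    then have "b ^ Suc (Suc e) \<le> b ^ e'" using lo by (intro exp_mono_lt[where n="Suc e"]) auto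
    then show "lv q ap < b ^ e'" using lvb eT by simp
  qed
  ultimately show ?thesis using lo hi b2 lvb unfolding cprops_def by auto
qed

end



context sim
begin

lemma same_run: "run (Suc t) = run t \<Longrightarrow> D (Suc t) i = D t i"
  by (simp add: D_def st_def hp_def tp_def)

lemma D_Suc_far: assumes "i \<noteq> hp t" "Suc i \<noteq> hp t" "i \<noteq> Suc (hp t)" shows "D (Suc t) i = D t i"
proof (cases "st t \<in> FF")
  case True
  then show ?thesis using halted_Suc same_run by blast
next
  case False
  obtain q' a' d where dd: "\<delta> (st t) (tp t (hp t)) = (q', a', d)" by (metis prod_cases3)
  note ns = step_nonhalt[OF False dd]
  have h1: "1 \<le> hp t" using hp_bounds[of t] by simp
  have "hp (Suc t) \<noteq> i" using ns assms h1 by (cases d) auto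
  moreover have "tp (Suc t) i = tp t i" using ns assms by simp
  ultimately show ?thesis using assms by (simp add: D_def)
qed

lemma trans_digits:
  assumes "hp t = Suc m" "1 \<le> m"
  shows "tu (st t) (tp t m) (tp t (Suc m)) (tp t (Suc (Suc m))) (Suc m)
      = D t m * b ^ Suc (Suc (T - Suc m - 1)) + D t (Suc m) * b ^ Suc (T - Suc m - 1) + D t (Suc (Suc m)) * b ^ (T - Suc m - 1)"
    and "tv (st t) (tp t m) (tp t (Suc m)) (tp t (Suc (Suc m))) (Suc m)
      = D (Suc t) m * b ^ Suc (Suc (T - Suc m - 1)) + D (Suc t) (Suc m) * b ^ Suc (T - Suc m - 1) + D (Suc t) (Suc (Suc m)) * b ^ (T - Suc m - 1)"
proof -
  show tu: "tu (st t) (tp t m) (tp t (Suc m)) (tp t (Suc (Suc m))) (Suc m)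
      = D t m * b ^ Suc (Suc (T - Suc m - 1)) + D t (Suc m) * b ^ Suc (T - Suc m - 1) + D t (Suc (Suc m)) * b ^ (T - Suc m - 1)"
    using assms by (simp add: tu_def D_def)
  show "tv (st t) (tp t m) (tp t (Suc m)) (tp t (Suc (Suc m))) (Suc m)
      = D (Suc t) m * b ^ Suc (Suc (T - Suc m - 1)) + D (Suc t) (Suc m) * b ^ Suc (T - Suc m - 1) + D (Suc t) (Suc (Suc m)) * b ^ (T - Suc m - 1)"
  proof (cases "st t \<in> FF")
    case True
    then have "\<And>i. D (Suc t) i = D t i" using halted_Suc same_run by blast
    then show ?thesis using True tu by (simp add: tv_def)
  next
    case False
    obtain q' a' d where dd: "\<delta> (st t) (tp t (hp t)) = (q', a', d)" by (metis prod_cases3)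
    note ns = step_nonhalt[OF False dd]
    show ?thesis
    proof (cases d)
      case L
      then show ?thesis using ns False dd assms by (simp add: tv_def D_def)
    next
      case R
      then show ?thesis using ns False dd assms by (simp add: tv_def D_def)
    qed
  qed
qed

lemma left_digits:
  assumes "hp t = 1"
  shows "st t \<notin> FF"
    and "lu (st t) (tp t 2) = D t 1 * b ^ Suc (T - 2) + D t 2 * b ^ (T - 2)"
    and "lv (st t) (tp t 2) = D (Suc t) 1 * b ^ Suc (T - 2) + D (Suc t) 2 * b ^ (T - 2)"
proof -
  show nf: "st t \<notin> FF" using shape[of t] assms by auto
  have t1: "tp t 1 = dollar" using basic_inv[of t] by simp
  show "lu (st t) (tp t 2) = D t 1 * b ^ Suc (T - 2) + D t 2 * b ^ (T - 2)"
    using assms t1 by (simp add: lu_def D_def)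
  from left_end nf obtain q' where dd0: "\<delta> (st t) dollar = (q', dollar, R)" by auto
  then have dd: "\<delta> (st t) (tp t (hp t)) = (q', dollar, R)" using assms t1 by simp
  note ns = step_nonhalt[OF nf dd]
  show "lv (st t) (tp t 2) = D (Suc t) 1 * b ^ Suc (T - 2) + D (Suc t) 2 * b ^ (T - 2)"
    using ns assms dd0 by (simp add: lv_def D_def)
qed

lemma suf_d1: "m \<le> T \<Longrightarrow> suf t m - suf t (Suc m) = D t m * b ^ (T - m)"
  using sufs_split[of m T b "D t"] by simp

lemma suf_d3: assumes "m + 2 \<le> T"
  shows "suf t m - suf t (m + 3) = D t m * b ^ (T - m) + D t (Suc m) * b ^ (T - Suc m) + D t (Suc (Suc m)) * b ^ (T - Suc (Suc m))"
  using sufs_split[of m T b "D t"] sufs_split[of "Suc m" T b "D t"] sufs_split[of "Suc (Suc m)" T b "D t"] assms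
  by (simp add: numeral_3_eq_3)

lemma pre_d1: "1 \<le> m \<Longrightarrow> pre t (Suc m) - pre t m = D t m * b ^ (T - m)"
  using pres_Suc[of m b T "D t"] by simp

lemma pre_d3: assumes "1 \<le> m"
  shows "pre t (m + 3) - pre t m = D t m * b ^ (T - m) + D t (Suc m) * b ^ (T - Suc m) + D t (Suc (Suc m)) * b ^ (T - Suc (Suc m))"
  using pres_Suc[of m b T "D t"] pres_Suc[of "Suc m" b T "D t"] pres_Suc[of "Suc (Suc m)" b T "D t"] assms
  by (simp add: numeral_3_eq_3)

definition nxt where "nxt t m = (if m = hp t then m + 2 else if Suc m = hp t then m + 3 else Suc m)"
definition u0 where "u0 t m = suf t m - suf t (nxt t m)"
definition v0 where "v0 t m = pre (Suc t) (nxt t m) - pre (Suc t) m"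
definition c0 where "c0 t m = u0 t m * Q t - v0 t m * Q (Suc t)"
definition valid where "valid t m \<longleftrightarrow> 1 \<le> m \<and> m \<le> Suc T \<and> m \<noteq> Suc (hp t) \<and> (m = hp t \<longrightarrow> hp t = 1)"

lemma kind_C:
  assumes "valid t m" "m \<le> T" "m \<noteq> hp t" "Suc m \<noteq> hp t"
  shows "nxt t m = Suc m \<and> u0 t m = cu (tp t m) m \<and> v0 t m = cu (tp t m) m"
proof -
  have n: "nxt t m = Suc m" using assms by (simp add: nxt_def)
  have "u0 t m = D t m * b ^ (T - m)" using n suf_d1[OF assms(2)] by (simp add: u0_def)
  moreover have "v0 t m = D (Suc t) m * b ^ (T - m)" using n pre_d1[of m "Suc t"] assms(1) by (simp add: v0_def valid_def)
  moreover have "D (Suc t) m = D t m" using assms by (intro D_Suc_far) (auto simp: valid_def)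
  ultimately show ?thesis using n assms(3) by (simp add: cu_def D_far)
qed

lemma kind_X:
  assumes "valid t m" "Suc m = hp t"
  shows "nxt t m = m + 3 \<and> m + 2 \<le> T \<and> 2 \<le> Suc m \<and> Suc m \<le> T - 1
    \<and> u0 t m = tu (st t) (tp t m) (tp t (Suc m)) (tp t (Suc (Suc m))) (Suc m)
    \<and> v0 t m = tv (st t) (tp t m) (tp t (Suc m)) (tp t (Suc (Suc m))) (Suc m)"
proof -
  have m1: "1 \<le> m" using assms by (simp add: valid_def)
  have hb: "hp t \<le> T - 1" using hp_bounds[of t] by simp
  have mT: "m + 2 \<le> T" using hb assms(2) T_ge by simp
  have n: "nxt t m = m + 3" using assms by (simp add: nxt_def)
  obtain e where e: "T - Suc m - 1 = e" by blast
  have e1: "T - m = Suc (Suc e)" "T - Suc m = Suc e" "T - Suc (Suc m) = e" using mT e by auto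
  have "u0 t m = suf t m - suf t (m + 3)" by (simp add: u0_def n)
  also have "\<dots> = D t m * b ^ Suc (Suc e) + D t (Suc m) * b ^ Suc e + D t (Suc (Suc m)) * b ^ e"
    using suf_d3[OF mT, of t] unfolding e1 .
  also have "\<dots> = tu (st t) (tp t m) (tp t (Suc m)) (tp t (Suc (Suc m))) (Suc m)"
    using trans_digits(1)[OF assms(2)[symmetric] m1] unfolding e by (rule sym)
  finally have u: "u0 t m = tu (st t) (tp t m) (tp t (Suc m)) (tp t (Suc (Suc m))) (Suc m)" .
  have "v0 t m = pre (Suc t) (m + 3) - pre (Suc t) m" by (simp add: v0_def n)
  also have "\<dots> = D (Suc t) m * b ^ Suc (Suc e) + D (Suc t) (Suc m) * b ^ Suc e + D (Suc t) (Suc (Suc m)) * b ^ e"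
    using pre_d3[OF m1, of "Suc t"] unfolding e1 .
  also have "\<dots> = tv (st t) (tp t m) (tp t (Suc m)) (tp t (Suc (Suc m))) (Suc m)"
    using trans_digits(2)[OF assms(2)[symmetric] m1] unfolding e by (rule sym)
  finally have v: "v0 t m = tv (st t) (tp t m) (tp t (Suc m)) (tp t (Suc (Suc m))) (Suc m)" .
  show ?thesis using u v n mT m1 hb assms(2) by simp
qed

lemma kind_L:
  assumes "valid t m" "m = hp t"
  shows "m = 1 \<and> hp t = 1 \<and> nxt t m = 3 \<and> st t \<notin> FF \<and> u0 t m = lu (st t) (tp t 2) \<and> v0 t m = lv (st t) (tp t 2)"
proof -
  have h: "hp t = 1" "m = 1" using assms by (auto simp: valid_def)
  have n: "nxt t m = 3" using h by (simp add: nxt_def)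
  have T2: "1 + 2 \<le> T" using T_ge by simp
  obtain e where e: "T - 2 = e" by blast
  have e1: "T - 1 = Suc e" "T - Suc 1 = e" using T_ge e by auto
  have s3: "suf t 1 - suf t 3 = D t 1 * b ^ Suc (T - 2) + D t 2 * b ^ (T - 2)"
    using sufs_split[of 1 T b "D t"] sufs_split[of 2 T b "D t"] T_ge unfolding e e1 by (simp add: numeral_3_eq_3 numeral_2_eq_2)
  have p3: "pre (Suc t) 3 - pre (Suc t) 1 = D (Suc t) 1 * b ^ Suc (T - 2) + D (Suc t) 2 * b ^ (T - 2)"
    using pres_Suc[of 1 b T "D (Suc t)"] pres_Suc[of 2 b T "D (Suc t)"] T_ge unfolding e e1 by (simp add: numeral_3_eq_3 numeral_2_eq_2)
  show ?thesis using h n s3 p3 left_digits[OF h(1)] by (simp add: u0_def v0_def)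
qed

lemma c0_in:
  assumes "valid t m" "m \<le> T" "t < T"
  shows "c0 t m \<in> CC \<and> cprops (u0 t m) (v0 t m)"
proof (cases "m = hp t")
  case True
  note kL = kind_L[OF assms(1) True]
  have u: "u0 t m = lu (st t) (tp t 2)" and v: "v0 t m = lv (st t) (tp t 2)" using kL by auto
  show ?thesis unfolding c0_def u v using left_in[of "st t" t "tp t 2"] kL lu_props assms(3) by auto
next
  case F1: False
  show ?thesis
  proof (cases "Suc m = hp t")
    case True
    note kX = kind_X[OF assms(1) True]
    have u: "u0 t m = tu (st t) (tp t m) (tp t (Suc m)) (tp t (Suc (Suc m))) (Suc m)"
      and v: "v0 t m = tv (st t) (tp t m) (tp t (Suc m)) (tp t (Suc (Suc m))) (Suc m)" using kX by auto
    show ?thesis unfolding c0_def u v using trans_in[of "Suc m" t] tu_props[of "Suc m"] kX assms(3) by auto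
  next
    case False
    note kC = kind_C[OF assms(1,2) F1 False]
    have u: "u0 t m = cu (tp t m) m" and v: "v0 t m = cu (tp t m) m" using kC by auto
    have m1: "1 \<le> m" using assms(1) by (simp add: valid_def)
    show ?thesis unfolding c0_def u v using copy_in[OF m1 assms(2,3)] cu_props[OF m1 assms(2)] by auto
  qed
qed

end



context sim
begin

lemma A_split: assumes "m \<le> T"
  shows "suf t m = D t m * b ^ (T - m) + suf t (Suc m) \<and> 0 \<le> suf t (Suc m) \<and> suf t (Suc m) < b ^ (T - m)"
  using sufs_split[OF assms, of b "D t"] suf_lt[of "Suc m" t] assms by simp

lemma pow_mono_le: "n \<le> n' \<Longrightarrow> b ^ n \<le> b ^ n'"
  using b_pos by (intro power_increasing) auto

lemma Dm_pos: "0 < D t m * b ^ n" using D_rng[of t m] b_pos by simp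

lemma u0_lb:
  assumes "valid t m" "m \<le> T"
  shows "D t m * b ^ (T - m) \<le> u0 t m"
    and "m = hp t \<or> Suc m = hp t \<Longrightarrow> D t m * b ^ (T - m) < u0 t m"
    and "m \<noteq> hp t \<Longrightarrow> Suc m \<noteq> hp t \<Longrightarrow> u0 t m = D t m * b ^ (T - m)"
proof -
  have C: "u0 t m = D t m * b ^ (T - m)" if "m \<noteq> hp t" "Suc m \<noteq> hp t"
    using kind_C[OF assms that] that by (simp add: cu_def D_far)
  have X: "D t m * b ^ (T - m) < u0 t m" if "Suc m = hp t"
  proof -
    note kX = kind_X[OF assms(1) that]
    have m1: "1 \<le> m" using assms(1) by (simp add: valid_def)
    obtain e where e: "T - Suc m - 1 = e" by blast
    have e1: "T - m = Suc (Suc e)" using kX e by auto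
    have "u0 t m = D t m * b ^ Suc (Suc e) + D t (Suc m) * b ^ Suc e + D t (Suc (Suc m)) * b ^ e"
      using kX trans_digits(1)[OF that[symmetric] m1] unfolding e by simp
    moreover have "0 < D t (Suc m) * b ^ Suc e" "0 < D t (Suc (Suc m)) * b ^ e" by (rule Dm_pos)+
    ultimately show ?thesis unfolding e1 by linarith
  qed
  have L: "D t m * b ^ (T - m) < u0 t m" if "m = hp t"
  proof -
    note kL = kind_L[OF assms(1) that]
    have h: "m = 1" "hp t = 1" using kL by auto
    have "u0 t m = lu (st t) (tp t 2)" using kL by blast
    also have "\<dots> = D t 1 * b ^ Suc (T - 2) + D t 2 * b ^ (T - 2)" by (rule left_digits(2)[OF h(2)])
    finally have u: "u0 t m = D t 1 * b ^ Suc (T - 2) + D t 2 * b ^ (T - 2)" .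
    have l: "D t m * b ^ (T - m) = D t 1 * b ^ Suc (T - 2)" using h T_ge by (simp add: Suc_diff_Suc numeral_2_eq_2)
    have "0 < D t 2 * b ^ (T - 2)" by (rule Dm_pos)
    then show ?thesis using u l by linarith
  qed
  show "D t m * b ^ (T - m) \<le> u0 t m"
  proof (cases "m = hp t")
    case True then show ?thesis using L by (simp add: less_imp_le)
  next
    case F: False
    show ?thesis
    proof (cases "Suc m = hp t")
      case True then show ?thesis using X by (simp add: less_imp_le)
    next
      case False then show ?thesis using C F by simp
    qed
  qed
  show "m = hp t \<or> Suc m = hp t \<Longrightarrow> D t m * b ^ (T - m) < u0 t m" using X L by blast
  show "m \<noteq> hp t \<Longrightarrow> Suc m \<noteq> hp t \<Longrightarrow> u0 t m = D t m * b ^ (T - m)" using C by blast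
qed

lemma cu_lt: "1 \<le> i \<Longrightarrow> i \<le> T \<Longrightarrow> cu a i < b ^ Suc (T - i)"
  using two_lt[of 0 b "int (g a)" "T - i"] g_lt b_pos by (simp add: cu_def)

lemma cu_ge: "b ^ (T - i) \<le> cu a i"
proof -
  have "1 * b ^ (T - i) \<le> int (g a) * b ^ (T - i)" using g_rng[of a] b_pos by (intro mult_right_mono) auto
  then show ?thesis by (simp add: cu_def)
qed

lemma copy_dig:
  assumes "valid t m" "m \<le> T" "1 \<le> i" "i \<le> T" "cu a i \<le> suf t m"
  shows "cu a i < u0 t m \<or> (m \<noteq> hp t \<and> Suc m \<noteq> hp t \<and> i = m \<and> a = tp t m)"
proof -
  have m1: "1 \<le> m" using assms(1) by (simp add: valid_def)
  note As = A_split[OF assms(2), of t]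
  note lb = u0_lb[OF assms(1,2)]
  consider "i < m" | "i = m" | "m < i" by linarith
  then show ?thesis
  proof cases
    case 1
    have "b ^ (Suc T - m) \<le> b ^ (T - i)" using 1 assms by (intro pow_mono_le) auto
    moreover have "suf t m < b ^ (Suc T - m)" using suf_lt[of m t] assms by simp
    moreover have "b ^ (T - i) \<le> cu a i" by (rule cu_ge)
    ultimately have False using assms(5) by linarith
    then show ?thesis ..
  next
    case 2
    have e: "suf t m = D t m * b ^ (T - m) + suf t (Suc m)" and r0: "0 \<le> suf t (Suc m)"
      and r1: "suf t (Suc m) < b ^ (T - m)" using As by blast+
    have cu_m: "cu a i = int (g a) * b ^ (T - m)" using 2 by (simp add: cu_def)
    have c1: "cu a i = b ^ (T - m) * int (g a)" using cu_m by (simp only: mult.commute)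
    have c2: "D t m * b ^ (T - m) = b ^ (T - m) * D t m" by (rule mult.commute)
    have ineq: "b ^ (T - m) * int (g a) \<le> b ^ (T - m) * D t m + suf t (Suc m)"
      using assms(5) e c1 c2 by linarith
    have P0: "0 < b ^ (T - m)" using b_pos by simp
    have ga: "int (g a) \<le> D t m" by (rule mult_le_cancel_rem[OF P0 r0 r1 ineq])
    show ?thesis
    proof (cases "m \<noteq> hp t \<and> Suc m \<noteq> hp t")
      case True
      then have Dm: "D t m = int (g (tp t m))" by (simp add: D_far)
      show ?thesis
      proof (cases "g a = g (tp t m)")
        case True
        have "a = tp t m" using g_inj[OF True] .
        then show ?thesis using `m \<noteq> hp t \<and> Suc m \<noteq> hp t` 2 by simp
      next
        case False
        then have "int (g a) + 1 \<le> D t m" using ga Dm by simp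
        then have "(int (g a) + 1) * b ^ (T - m) \<le> D t m * b ^ (T - m)" using b_pos by (intro mult_right_mono) auto
        then have h: "int (g a) * b ^ (T - m) + b ^ (T - m) \<le> D t m * b ^ (T - m)" by (simp add: algebra_simps)
        have "cu a i < u0 t m" using h lb(1) P0 cu_m by linarith
        then show ?thesis by blast
      qed
    next
      case False
      then have "D t m * b ^ (T - m) < u0 t m" using lb(2) by blast
      moreover have "int (g a) * b ^ (T - m) \<le> D t m * b ^ (T - m)" using ga b_pos by (intro mult_right_mono) auto
      ultimately have "cu a i < u0 t m" unfolding cu_m by linarith
      then show ?thesis by blast
    qed
  next
    case 3
    have "cu a i < b ^ Suc (T - i)" using cu_lt assms by simp
    moreover have "b ^ Suc (T - i) \<le> b ^ (T - m)" using 3 assms by (intro pow_mono_le) auto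
    moreover have "b ^ (T - m) \<le> D t m * b ^ (T - m)" using D_rng[of t m] b_pos by simp
    ultimately show ?thesis using lb(1) by linarith
  qed
qed

end



lemma lead_bound:
  fixes b p z :: int
  assumes "0 \<le> p" "p \<le> b - 1" "0 \<le> z" "z \<le> b - 1"
  shows "p * b + z < b * b"
proof -
  have "p * b \<le> (b - 1) * b" using assms by (intro mult_right_mono) auto
  then show ?thesis using assms by (simp add: algebra_simps)
qed

context sim
begin

lemma g_ltB: "g a < B" using g_lt(1)[of a] by linarith
lemma pc_ltb: "pc q a < b" using pc_lt(1)[of q a] by linarith

lemma trans_dig:
  assumes "valid t m" "m \<le> T" "2 \<le> i" "i \<le> T - 1" "tu q am a ap i \<le> suf t m"
  shows "tu q am a ap i < u0 t m \<or> (Suc m = hp t \<and> i = Suc m \<and> q = st t \<and> am = tp t m \<and> a = tp t (Suc m) \<and> ap = tp t (Suc (Suc m)))"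
proof -
  have m1: "1 \<le> m" using assms(1) by (simp add: valid_def)
  obtain e where e: "T - i - 1 = e" by blast
  have eT: "T - i = Suc e" "Suc (Suc (Suc e)) \<le> T" using assms e T_ge by auto
  have tu_e: "tu q am a ap i = int (g am) * b ^ Suc (Suc e) + pc q a * b ^ Suc e + int (g ap) * b ^ e"
    unfolding tu_def e by (rule refl)
  have P0: "0 < b ^ e" using b_pos by simp
  have nn: "0 \<le> pc q a * b ^ Suc e" "0 \<le> int (g ap) * b ^ e" using pc_lt g_lt b_pos by simp_all
  have "1 * b ^ Suc (Suc e) \<le> int (g am) * b ^ Suc (Suc e)" using g_rng[of am] b_pos by (intro mult_right_mono) auto
  then have lo: "b ^ Suc (Suc e) \<le> tu q am a ap i" using tu_e nn by linarith
  have hi: "tu q am a ap i < b ^ Suc (Suc (Suc e))" unfolding tu_e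
    by (rule three_lt) (use g_lt pc_lt b_pos in auto)
  note lb = u0_lb[OF assms(1,2)]
  have Alt: "suf t m < b ^ (Suc T - m)" using suf_lt[of m t] assms by simp
  consider "i \<le> m" | "i = Suc m" | "Suc (Suc m) \<le> i" by linarith
  then show ?thesis
  proof cases
    case 1
    have "b ^ (Suc T - m) \<le> b ^ Suc (Suc e)" using 1 eT assms by (intro pow_mono_le) auto
    then have False using lo Alt assms(5) by linarith
    then show ?thesis ..
  next
    case 3
    have "b ^ Suc (Suc (Suc e)) \<le> b ^ (T - m)" using 3 eT assms by (intro pow_mono_le) auto
    moreover have "b ^ (T - m) \<le> D t m * b ^ (T - m)" using D_rng[of t m] b_pos by simp
    ultimately have "tu q am a ap i < u0 t m" using hi lb(1) by linarith
    then show ?thesis ..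
  next
    case 2
    have mT: "m + 2 \<le> T" using 2 assms by simp
    have e1: "T - m = Suc (Suc e)" "T - Suc m = Suc e" "T - Suc (Suc m) = e" using 2 eT by auto
    have A: "suf t m = D t m * b ^ Suc (Suc e) + D t (Suc m) * b ^ Suc e + D t (Suc (Suc m)) * b ^ e + suf t (m + 3)"
      using suf_d3[OF mT, of t] unfolding e1 by simp
    have r: "0 \<le> suf t (m + 3)" "suf t (m + 3) < b ^ e" using suf_lt[of "m + 3" t] mT e1 by auto
    define X' where "X' = int (g am) * b * b + pc q a * b + int (g ap)"
    define X where "X = D t m * b * b + D t (Suc m) * b + D t (Suc (Suc m))"
    have tuX: "tu q am a ap i = b ^ e * X'" unfolding tu_e X'_def by (simp add: algebra_simps)
    have AX: "suf t m = b ^ e * X + suf t (m + 3)" unfolding A X_def by (simp add: algebra_simps)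
    have "b ^ e * X' \<le> b ^ e * X + suf t (m + 3)" using assms(5) tuX AX by simp
    then have XX: "X' \<le> X" by (rule mult_le_cancel_rem[OF P0 r])
    have Dm_le: "D t m * b ^ (T - m) = b ^ e * (D t m * b * b)" unfolding e1 by (simp add: algebra_simps)
    have tail: "pc q a * b + int (g ap) < b * b" by (rule lead_bound) (use pc_lt g_lt in auto)
    show ?thesis
    proof (cases "Suc m = hp t")
      case True
      note kX = kind_X[OF assms(1) True]
      have "u0 t m = tu (st t) (tp t m) (tp t (Suc m)) (tp t (Suc (Suc m))) (Suc m)" using kX by blast
      also have "\<dots> = D t m * b ^ Suc (Suc (T - Suc m - 1)) + D t (Suc m) * b ^ Suc (T - Suc m - 1) + D t (Suc (Suc m)) * b ^ (T - Suc m - 1)"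
        by (rule trans_digits(1)[OF True[symmetric] m1])
      also have "\<dots> = b ^ e * X" using 2 e unfolding X_def by (simp add: algebra_simps)
      finally have u0X: "u0 t m = b ^ e * X" .
      show ?thesis
      proof (cases "X' < X")
        case True
        then have "b ^ e * X' < b ^ e * X" using P0 by simp
        then show ?thesis using tuX u0X by simp
      next
        case False
        then have "X' = X" using XX by simp
        then have eqs: "int (g ap) = D t (Suc (Suc m)) \<and> pc q a = D t (Suc m) \<and> int (g am) = D t m"
          unfolding X'_def X_def using g_lt pc_lt g_ltB pc_ltb D_rng[of t "Suc m"] D_rng[of t "Suc (Suc m)"] b_pos
          by (intro digits3[where b=b]) (simp_all add: power2_eq_square algebra_simps)
        have d1: "D t m = int (g (tp t m))" using True by (simp add: D_far)
        have d2: "D t (Suc m) = pc (st t) (tp t (Suc m))" using True D_hd[of t] by simp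
        have d3: "D t (Suc (Suc m)) = int (g (tp t (Suc (Suc m))))" using True by (simp add: D_far)
        have "am = tp t m" using eqs d1 g_inj by simp
        moreover have "ap = tp t (Suc (Suc m))" using eqs d3 g_inj by simp
        moreover have "q = st t \<and> a = tp t (Suc m)" using eqs d2 by (intro pc_inj) simp
        ultimately show ?thesis using True 2 by simp
      qed
    next
      case F: False
      have lt: "X' < (int (g am) + 1) * b * b" unfolding X'_def using tail by (simp add: algebra_simps)
      have G1: "int (g am) + 1 \<le> D t m"
      proof (cases "m = hp t")
        case True
        then have "D t m = pc (st t) (tp t m)" using D_hd[of t] by simp
        then show ?thesis using pc_rng[of "st t" "tp t m"] g_rng[of am] by simp
      next
        case False
        have d2: "D t (Suc m) \<le> int CARD('g)" using F g_rng[of "tp t (Suc m)"] by (simp add: D_far)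
        show ?thesis
        proof (rule ccontr)
          assume "\<not> int (g am) + 1 \<le> D t m"
          then have "D t m \<le> int (g am)" by simp
          then have "D t m * b * b \<le> int (g am) * b * b" using b_pos by (intro mult_right_mono) auto
          moreover have "(int CARD('g) + 1) * b \<le> pc q a * b" using pc_rng[of q a] b_pos by (intro mult_right_mono) auto
          moreover have "D t (Suc m) * b \<le> int CARD('g) * b" using d2 b_pos by (intro mult_right_mono) auto
          moreover have "D t (Suc (Suc m)) \<le> b - 1" "0 \<le> int (g ap)" using D_rng[of t "Suc (Suc m)"] g_lt by auto
          ultimately show False using XX unfolding X'_def X_def by (simp add: algebra_simps)
        qed
      qed
      have "(int (g am) + 1) * b * b \<le> D t m * b * b" using G1 b_pos by (intro mult_right_mono) auto
      then have "X' < D t m * b * b" using lt by simp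
      then have "b ^ e * X' < b ^ e * (D t m * b * b)" using P0 by simp
      then have "tu q am a ap i < D t m * b ^ (T - m)" using tuX Dm_le by linarith
      then show ?thesis using lb(1) by simp
    qed
  qed
qed

end



lemma lower_block2:
  fixes u v Z A Qt Qt' Qt'1 R :: int
  assumes "u * Z - v \<ge> Z - 1" "A \<le> Z - 2" "0 \<le> A" "0 \<le> Qt" "Qt' = Z * Qt'1" "Qt \<le> Qt'1"
    "R < (A + 1) * Qt"
  shows "\<not> (u * Qt' - v * Qt'1 \<le> R)"
proof -
  have c: "(A + 1) * Qt'1 \<le> (u * Z - v) * Qt'1" using assms by (intro mult_right_mono) auto
  have d: "(A + 1) * Qt \<le> (A + 1) * Qt'1" using assms by (intro mult_left_mono) auto
  have "u * Qt' - v * Qt'1 = (u * Z - v) * Qt'1" using assms(5) by (simp add: algebra_simps)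
  then show ?thesis using c d assms(7) by linarith
qed

context sim
begin

lemma left_dig:
  assumes "valid t m" "m \<le> T" "lu q ap \<le> suf t m"
  shows "lu q ap < u0 t m \<or> (m = hp t \<and> q = st t \<and> ap = tp t 2)"
proof -
  have m1: "1 \<le> m" using assms(1) by (simp add: valid_def)
  obtain e where e: "T - 2 = e" by blast
  have e1: "T - 1 = Suc e" "Suc (Suc e) = T" using T_ge e by auto
  have lu_e: "lu q ap = pc q dollar * b ^ Suc e + int (g ap) * b ^ e" unfolding lu_def e by (rule refl)
  have P0: "0 < b ^ e" using b_pos by simp
  have nn: "0 \<le> int (g ap) * b ^ e" using g_lt b_pos by simp
  have "1 * b ^ Suc e \<le> pc q dollar * b ^ Suc e" using pc_rng[of q dollar] b_pos by (intro mult_right_mono) auto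
  then have lo: "b ^ Suc e \<le> lu q ap" using lu_e nn by linarith
  have Alt: "suf t m < b ^ (Suc T - m)" using suf_lt[of m t] assms by simp
  show ?thesis
  proof (cases "m = 1")
    case False
    have "b ^ (Suc T - m) \<le> b ^ Suc e" using False m1 e1 by (intro pow_mono_le) auto
    then have False using lo Alt assms(3) by linarith
    then show ?thesis ..
  next
    case True
    have s1: "suf t 1 = D t 1 * b ^ (T - 1) + suf t 2"
      using sufs_split[of 1 T b "D t"] T_ge by (simp add: numeral_2_eq_2)
    have s2: "suf t 2 = D t 2 * b ^ (T - 2) + suf t 3"
      using sufs_split[of 2 T b "D t"] T_ge by (simp add: numeral_3_eq_3)
    have r: "0 \<le> suf t 3" "suf t 3 < b ^ e" using suf_lt[of 3 t] T_ge e by auto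
    define X' where "X' = pc q dollar * b + int (g ap)"
    define X where "X = D t 1 * b + D t 2"
    have luX: "lu q ap = b ^ e * X'" unfolding lu_e X'_def by (simp add: algebra_simps)
    have AX: "suf t 1 = b ^ e * X + suf t 3" unfolding X_def using s1 s2 e e1 by (simp add: algebra_simps)
    have "b ^ e * X' \<le> b ^ e * X + suf t 3" using assms(3) luX AX True by simp
    then have XX: "X' \<le> X" by (rule mult_le_cancel_rem[OF P0 r])
    show ?thesis
    proof (cases "hp t = 1")
      case True
      have "u0 t m = lu (st t) (tp t 2)" using kind_L[OF assms(1)] True `m = 1` by simp
      also have "\<dots> = D t 1 * b ^ Suc (T - 2) + D t 2 * b ^ (T - 2)" by (rule left_digits(2)[OF True])
      also have "\<dots> = b ^ e * X" unfolding X_def e by (simp add: algebra_simps)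
      finally have u0X: "u0 t m = b ^ e * X" .
      show ?thesis
      proof (cases "X' < X")
        case True
        then have "b ^ e * X' < b ^ e * X" using P0 by simp
        then show ?thesis using luX u0X by simp
      next
        case False
        then have "X' = X" using XX by simp
        then have eqs: "int (g ap) = D t 2 \<and> pc q dollar = D t 1"
          unfolding X'_def X_def using g_lt g_ltB D_rng[of t 2]
          by (intro digits2[where b=b]) (simp_all add: algebra_simps)
        have t1: "tp t 1 = dollar" using basic_inv[of t] by simp
        have d1: "D t 1 = pc (st t) dollar" using True t1 D_hd[of t] by simp
        have d2: "D t 2 = int (g (tp t 2))" using True by (simp add: D_far)
        have "ap = tp t 2" using eqs d2 g_inj by simp
        moreover have "q = st t" using pc_inj[of q dollar "st t" dollar] eqs d1 by simp
        ultimately show ?thesis using True `m = 1` by simp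
      qed
    next
      case False
      have d1: "D t 1 \<le> int CARD('g)" using False g_rng[of "tp t 1"] by (simp add: D_far)
      have "(int CARD('g) + 1) * b \<le> pc q dollar * b" using pc_rng[of q dollar] b_pos by (intro mult_right_mono) auto
      moreover have "D t 1 * b \<le> int CARD('g) * b" using d1 b_pos by (intro mult_right_mono) auto
      moreover have "D t 2 \<le> b - 1" "0 \<le> int (g ap)" using D_rng[of t 2] g_lt by auto
      ultimately have False using XX unfolding X'_def X_def by (simp add: algebra_simps)
      then show ?thesis ..
    qed
  qed
qed

lemma block_cases:
  assumes cp: "cprops u v" and "t' < T" "t < T" "valid t m" "m \<le> T" and le: "u * Q t' - v * Q (Suc t') \<le> RR t m"
  shows "(t' = t \<and> u \<le> suf t m) \<or> u * Q t' - v * Q (Suc t') \<le> c0 t m"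
proof -
  have m1: "1 \<le> m" using assms(4) by (simp add: valid_def)
  have A0: "0 \<le> suf t m" using suf_lt[of m t] assms by simp
  have A2: "suf t m \<le> b ^ (Suc T - m) - 2" using suf_le2[OF m1 assms(5)] .
  have EZ: "b ^ (Suc T - m) \<le> Z" using m1 by (intro Z_ge) auto
  have E0: "0 < b ^ (Suc T - m)" using b_pos by simp
  have Bl: "0 \<le> pre (Suc t) m" "pre (Suc t) m \<le> Z - b ^ (Suc T - m)" using pre_le[OF m1, of "Suc t"] assms by auto
  have u: "1 \<le> u" "u \<le> Z - 1" "0 \<le> v" "v < Z" "Z - 1 \<le> u * Z - v" "\<And>e. u < b ^ e \<Longrightarrow> v < b ^ e"
    using cp unfolding cprops_def by auto
  have Qr: "Q (Suc t) = 0 \<and> Q t = 1 \<or> 0 < Q (Suc t) \<and> Q t = Z * Q (Suc t)" using Q_rel[OF assms(3)] .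
  consider "t' < t" | "t' = t" | "t < t'" by linarith
  then show ?thesis
  proof cases
    case 1
    have "\<not> (u * Q t' - v * Q (Suc t') \<le> RR t m)"
    proof (rule lower_block2[where Z=Z and A="suf t m"])
      show "Z - 1 \<le> u * Z - v" using u by auto
      show "suf t m \<le> Z - 2" using A2 EZ by linarith
      show "0 \<le> suf t m" by (rule A0)
      show "0 \<le> Q t" by (rule Q_nonneg)
      show "Q t' = Z * Q (Suc t')" using Q_Suc 1 assms by simp
      show "Q t \<le> Q (Suc t')" using Q_mono[of "Suc t'" t] 1 by simp
      show "RR t m < (suf t m + 1) * Q t" unfolding RR_def
        by (rule R_lt[OF Qr Bl(1)]) (use Bl E0 in linarith)
    qed
    then show ?thesis using le by simp
  next
    case 2
    have "u \<le> suf t m"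
    proof (rule same_block[where Qs="Q (Suc t)" and Qt="Q t" and Z=Z and v=v and Bl="pre (Suc t) m" and E="b ^ (Suc T - m)"])
      show "Q (Suc t) = 0 \<and> Q t = 1 \<or> 0 < Q (Suc t) \<and> Q t = Z * Q (Suc t)" by (rule Qr)
      show "0 \<le> v" "v < Z" using u by auto
      show "0 \<le> pre (Suc t) m" by (rule Bl(1))
      show "pre (Suc t) m + b ^ (Suc T - m) \<le> Z" using Bl by linarith
      show "suf t m + 2 \<le> b ^ (Suc T - m)" using A2 by linarith
      show "u < b ^ (Suc T - m) \<Longrightarrow> v < b ^ (Suc T - m)" by (rule u(6))
      show "u * Q t - v * Q (Suc t) \<le> suf t m * Q t + pre (Suc t) m * Q (Suc t)" using le 2 by (simp add: RR_def)
      show "0 \<le> suf t m" by (rule A0)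
    qed
    then show ?thesis using 2 by simp
  next
    case 3
    have sT: "Suc t < T" using 3 assms by simp
    have cp0: "cprops (u0 t m) (v0 t m)" using c0_in assms by blast
    have "u * Q t' - v * Q (Suc t') \<le> u0 t m * Q t - v0 t m * Q (Suc t)"
    proof (rule upper_block[where Z=Z])
      show "0 \<le> u" "u \<le> Z - 1" "0 \<le> v" using u by auto
      show "0 \<le> Q (Suc t')" by (rule Q_nonneg)
      show "Q t' \<le> Q (Suc t)" using Q_mono 3 by simp
      show "Q t = Z * Q (Suc t)" using Q_Suc[OF sT] .
      show "Z - 1 \<le> u0 t m * Z - v0 t m" using cp0 unfolding cprops_def by auto
      show "0 \<le> Q (Suc t)" by (rule Q_nonneg)
    qed
    then show ?thesis by (simp add: c0_def)
  qed
qed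

lemma v0Q: assumes "valid t m" "m \<le> T" "t < T" shows "v0 t m * Q (Suc t) \<le> Q t" "0 \<le> v0 t m"
proof -
  have cp0: "cprops (u0 t m) (v0 t m)" using c0_in assms by blast
  then have v: "0 \<le> v0 t m" "v0 t m < Z" unfolding cprops_def by auto
  show "0 \<le> v0 t m" using v by simp
  show "v0 t m * Q (Suc t) \<le> Q t"
    using Q_rel[OF assms(3)]
  proof
    assume "Q (Suc t) = 0 \<and> Q t = 1" then show ?thesis by simp
  next
    assume h: "0 < Q (Suc t) \<and> Q t = Z * Q (Suc t)"
    then have "v0 t m * Q (Suc t) \<le> Z * Q (Suc t)" using v by (intro mult_right_mono) auto
    then show ?thesis using h by simp
  qed
qed

lemma max_c0:
  assumes "valid t m" "m \<le> T" "t < T" "c \<in> CC" "c \<le> RR t m"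
  shows "c \<le> c0 t m"
proof -
  note v0 = v0Q[OF assms(1-3)]
  have sm: "u * Q t - v * Q (Suc t) \<le> c0 t m" if "u < u0 t m" "0 \<le> v" for u v
    unfolding c0_def using that v0 Q_nonneg by (intro smaller_u) auto
  from C_cases[OF assms(4)] show ?thesis
  proof (elim disjE exE conjE)
    fix a i t' assume h: "1 \<le> i" "i \<le> T" "t' < T" "c = cu a i * Q t' - cu a i * Q (Suc t')"
    note cp = cu_props[OF h(1,2), of a]
    have "(t' = t \<and> cu a i \<le> suf t m) \<or> c \<le> c0 t m" using block_cases[OF cp h(3) assms(3,1,2)] assms(5) h(4) by simp
    then show ?thesis
    proof
      assume b1: "t' = t \<and> cu a i \<le> suf t m"
      have v: "0 \<le> cu a i" using cp unfolding cprops_def by auto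
      from copy_dig[OF assms(1,2) h(1,2)] b1
      have "cu a i < u0 t m \<or> (m \<noteq> hp t \<and> Suc m \<noteq> hp t \<and> i = m \<and> a = tp t m)" by simp
      then show ?thesis
      proof
        assume "cu a i < u0 t m" then show ?thesis using sm[OF _ v] h(4) b1 by simp
      next
        assume e: "m \<noteq> hp t \<and> Suc m \<noteq> hp t \<and> i = m \<and> a = tp t m"
        then have "c0 t m = cu (tp t m) m * Q t - cu (tp t m) m * Q (Suc t)"
          using kind_C[OF assms(1,2)] by (simp add: c0_def)
        then show ?thesis using h(4) e b1 by simp
      qed
    qed
  next
    fix q am a ap i t' assume h: "2 \<le> i" "i \<le> T - 1" "t' < T" "c = tu q am a ap i * Q t' - tv q am a ap i * Q (Suc t')"
    note cp = tu_props[OF h(1,2), of q am a ap]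
    have "(t' = t \<and> tu q am a ap i \<le> suf t m) \<or> c \<le> c0 t m" using block_cases[OF cp h(3) assms(3,1,2)] assms(5) h(4) by simp
    then show ?thesis
    proof
      assume b1: "t' = t \<and> tu q am a ap i \<le> suf t m"
      have v: "0 \<le> tv q am a ap i" using cp unfolding cprops_def by auto
      from trans_dig[OF assms(1,2) h(1,2)] b1
      have "tu q am a ap i < u0 t m \<or> (Suc m = hp t \<and> i = Suc m \<and> q = st t \<and> am = tp t m \<and> a = tp t (Suc m) \<and> ap = tp t (Suc (Suc m)))" by simp
      then show ?thesis
      proof
        assume "tu q am a ap i < u0 t m" then show ?thesis using sm[OF _ v] h(4) b1 by simp
      next
        assume e: "Suc m = hp t \<and> i = Suc m \<and> q = st t \<and> am = tp t m \<and> a = tp t (Suc m) \<and> ap = tp t (Suc (Suc m))"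
        then have "c0 t m = tu q am a ap i * Q t - tv q am a ap i * Q (Suc t)"
          using kind_X[OF assms(1)] by (simp add: c0_def)
        then show ?thesis using h(4) b1 by simp
      qed
    qed
  next
    fix q ap t' assume h: "q \<notin> FF" "t' < T" "c = lu q ap * Q t' - lv q ap * Q (Suc t')"
    note cp = lu_props[of q ap]
    have "(t' = t \<and> lu q ap \<le> suf t m) \<or> c \<le> c0 t m" using block_cases[OF cp h(2) assms(3,1,2)] assms(5) h(3) by simp
    then show ?thesis
    proof
      assume b1: "t' = t \<and> lu q ap \<le> suf t m"
      have v: "0 \<le> lv q ap" using cp unfolding cprops_def by auto
      from left_dig[OF assms(1,2)] b1
      have "lu q ap < u0 t m \<or> (m = hp t \<and> q = st t \<and> ap = tp t 2)" by simp
      then show ?thesis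
      proof
        assume "lu q ap < u0 t m" then show ?thesis using sm[OF _ v] h(3) b1 by simp
      next
        assume e: "m = hp t \<and> q = st t \<and> ap = tp t 2"
        then have mh: "m = hp t" by simp
        note kL = kind_L[OF assms(1) mh]
        have uv: "u0 t m = lu (st t) (tp t 2)" "v0 t m = lv (st t) (tp t 2)" using kL by auto
        have "c0 t m = lu q ap * Q t - lv q ap * Q (Suc t)" unfolding c0_def uv using e by simp
        then show ?thesis using h(3) b1 by simp
      qed
    qed
  qed
qed

end



lemma three_le:
  fixes b x y z :: int
  assumes "0 \<le> x" "x \<le> b - 2" "0 \<le> y" "y \<le> b - 2" "0 \<le> z" "z \<le> b - 2" "2 \<le> b"
  shows "x * b^(Suc (Suc e)) + y * b^(Suc e) + z * b^e \<le> b^(Suc (Suc (Suc e))) - 2"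
proof -
  have p: "1 \<le> b^e" using assms by simp
  have "x * b^(Suc (Suc e)) \<le> (b - 2) * b^(Suc (Suc e))" using assms p by (intro mult_right_mono) auto
  moreover have "y * b^(Suc e) \<le> (b - 2) * b^(Suc e)" using assms p by (intro mult_right_mono) auto
  moreover have "z * b^e \<le> (b - 2) * b^e" using assms p by (intro mult_right_mono) auto
  moreover have "(b - 2) * b^(Suc (Suc e)) = b^(Suc (Suc (Suc e))) - 2 * b^(Suc (Suc e))"
    "(b - 2) * b^(Suc e) = b^(Suc (Suc e)) - 2 * b^(Suc e)" "(b - 2) * b^e = b^(Suc e) - 2 * b^e"
    by (simp_all add: algebra_simps)
  moreover have "0 \<le> b^(Suc e)" "0 \<le> b^(Suc (Suc e))" using assms by simp_all
  ultimately show ?thesis using p by linarith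
qed

context sim
begin

lemma RR_step: "RR t m - c0 t m = RR t (nxt t m)"
  unfolding RR_def c0_def u0_def v0_def by (simp add: algebra_simps)

lemma hp_le: "hp t \<le> T - 1" "1 \<le> hp t" using hp_bounds[of t] by auto

lemma nxt_props: assumes "valid t m" "m \<le> T" shows "valid t (nxt t m)" "m < nxt t m"
proof -
  have h: "hp t \<le> T - 1" "1 \<le> hp t" by (rule hp_le)+
  show "valid t (nxt t m)" using assms h T_ge unfolding valid_def nxt_def by auto
  show "m < nxt t m" unfolding nxt_def by auto
qed

lemma coins_pos: assumes "c \<in> CC" shows "0 < c"
proof -
  have gen: "0 < u * Q t' - v * Q (Suc t')" if cp: "cprops u v" and t': "t' < T" for u v t'
  proof -
    have u: "1 \<le> u" "Z - 1 \<le> u * Z - v" "0 \<le> v" "v < Z" using cp unfolding cprops_def by auto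
    show ?thesis using Q_rel[OF t']
    proof
      assume "Q (Suc t') = 0 \<and> Q t' = 1" then show ?thesis using u by simp
    next
      assume h: "0 < Q (Suc t') \<and> Q t' = Z * Q (Suc t')"
      have Z2: "2 \<le> Z"
      proof -
        have "b ^ 1 \<le> Z" using T_ge by (intro Z_ge) auto
        then have "b \<le> Z" by (simp only: power_one_right)
        then show ?thesis using b_pos by linarith
      qed
      have "u * Q t' - v * Q (Suc t') = (u * Z - v) * Q (Suc t')" using h by (simp add: algebra_simps)
      moreover have "0 < (u * Z - v) * Q (Suc t')" using u Z2 h by (intro mult_pos_pos) auto
      ultimately show ?thesis by simp
    qed
  qed
  from C_cases[OF assms] show ?thesis
  proof (elim disjE exE conjE)
    fix a i t' assume h: "1 \<le> i" "i \<le> T" "t' < T" "c = cu a i * Q t' - cu a i * Q (Suc t')"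
    then show ?thesis using gen[OF cu_props[OF h(1,2)] h(3)] by simp
  next
    fix q am a ap i t' assume h: "2 \<le> i" "i \<le> T - 1" "t' < T" "c = tu q am a ap i * Q t' - tv q am a ap i * Q (Suc t')"
    then show ?thesis using gen[OF tu_props[OF h(1,2)] h(3)] by simp
  next
    fix q ap t' assume h: "q \<notin> FF" "t' < T" "c = lu q ap * Q t' - lv q ap * Q (Suc t')"
    then show ?thesis using gen[OF lu_props h(2)] by simp
  qed
qed

abbreviation "W0 \<equiv> encode f g CARD('g) B T (init_config q0 dollar blank x) * bpow B ((int T - 1) * int T)"
abbreviation "gr \<tau> \<equiv> greedy_rem CC W0 \<tau>"

lemma W0_eq: "W0 = RR 0 1"
proof -
  have "init_config q0 dollar blank x = (st 0, hp 0, tp 0)" using run_0 run_eq[of 0] by simp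
  then have "encode f g CARD('g) B T (init_config q0 dollar blank x)
      = (\<Sum>i = 1..T. (if i = hp 0 then pc (st 0) (tp 0 i) else int (g (tp 0 i))) * bpow B (int T - int i))"
    by (simp add: encode_def)
  also have "\<dots> = (\<Sum>i = 1..T. D 0 i * b ^ (T - i))"
    by (rule sum.cong) (auto simp: D_def bpow_e)
  also have "\<dots> = suf 0 1" by (simp add: sufs_def)
  finally have e: "encode f g CARD('g) B T (init_config q0 dollar blank x) = suf 0 1" .
  have "bpow B ((int T - int 1) * int T) = Q (1 - 1)" using T_ge by (intro bpow_Qa) auto
  then have q: "bpow B ((int T - 1) * int T) = Q 0" by simp
  show ?thesis unfolding e q RR_def by (simp add: pres_def)
qed

lemma gstep:
  assumes "valid t m" "m \<le> T" "t < T" "gr \<tau> = RR t m"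
  shows "(\<exists>c\<in>CC. c \<le> gr \<tau>) \<and> Max {c \<in> CC. c \<le> gr \<tau>} = c0 t m \<and> gr (Suc \<tau>) = RR t (nxt t m)"
proof -
  have inC: "c0 t m \<in> CC" using c0_in assms by blast
  have "0 \<le> RR t (nxt t m)"
  proof -
    have v: "valid t (nxt t m)" using nxt_props assms by blast
    then have "1 \<le> nxt t m" "nxt t m \<le> Suc T" by (auto simp: valid_def)
    then have "0 \<le> suf t (nxt t m)" "0 \<le> pre (Suc t) (nxt t m)" using suf_lt pre_le by auto
    then show ?thesis unfolding RR_def using Q_nonneg by simp
  qed
  then have le: "c0 t m \<le> RR t m" using RR_step[of t m] by simp
  have ex: "\<exists>c\<in>CC. c \<le> gr \<tau>" using inC le assms(4) by (intro bexI[of _ "c0 t m"]) auto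
  have mx: "Max {c \<in> CC. c \<le> gr \<tau>} = c0 t m"
  proof (rule Max_eqI)
    show "finite {c \<in> CC. c \<le> gr \<tau>}" using C_finite by simp
    show "\<And>y. y \<in> {c \<in> CC. c \<le> gr \<tau>} \<Longrightarrow> y \<le> c0 t m" using max_c0 assms by auto
    show "c0 t m \<in> {c \<in> CC. c \<le> gr \<tau>}" using inC le assms(4) by simp
  qed
  have "gr (Suc \<tau>) = RR t m - c0 t m" using ex mx assms(4) by simp
  then show ?thesis using ex mx RR_step by simp
qed

lemma block_end: assumes "Suc t < T" shows "RR t (Suc T) = RR (Suc t) 1"
proof -
  have "pre (Suc t) (Suc T) + suf (Suc t) (Suc T) = suf (Suc t) 1" by (rule pres_sufs) auto
  then show ?thesis unfolding RR_def by (simp add: sufs_end pres_def)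
qed

lemma last_end: "RR (T - 1) (Suc T) = 0"
proof -
  have "Suc (T - 1) = T" using T_ge by simp
  then show ?thesis unfolding RR_def by (simp add: sufs_end Q_T)
qed

lemma hp_lt: "hp t < T" using hp_le[of t] T_ge by arith
lemma valid_1: "valid t 1" using hp_le[of t] T_ge by (simp add: valid_def)
lemma valid_end: "valid t (Suc T)" using hp_lt[of t] by (simp add: valid_def)

lemma reach_block:
  assumes "t < T" "\<exists>\<tau>. gr \<tau> = RR t 1"
  shows "valid t m \<Longrightarrow> \<exists>\<tau>. gr \<tau> = RR t m"
proof (induction m rule: less_induct)
  case (less m)
  show ?case
  proof (cases "m = 1")
    case True then show ?thesis using assms by simp
  next
    case False
    have m2: "2 \<le> m" "m \<le> Suc T" "m \<noteq> Suc (hp t)" "m \<noteq> hp t" using less.prems False by (auto simp: valid_def)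
    have h: "hp t \<le> T - 1" "1 \<le> hp t" by (rule hp_le)+
    obtain p where p: "valid t p" "p < m" "p \<le> T" "nxt t p = m"
    proof (cases "m = Suc (Suc (hp t))")
      case True
      show ?thesis
      proof (cases "hp t = 1")
        case True
        then show ?thesis using that[of 1] `m = Suc (Suc (hp t))` h T_ge by (auto simp: valid_def nxt_def)
      next
        case False
        have h2: "2 \<le> hp t" using False h by simp
        have "valid t (hp t - 1)" using h2 hp_lt[of t] unfolding valid_def by auto
        moreover have "hp t - 1 < m" "hp t - 1 \<le> T" using `m = Suc (Suc (hp t))` h2 hp_lt[of t] by auto
        moreover have "nxt t (hp t - 1) = m" using `m = Suc (Suc (hp t))` h2 unfolding nxt_def by auto
        ultimately show ?thesis by (rule that)
      qed
    next
      case False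
      have a1: "m - 1 \<noteq> hp t" using m2 by auto
      have a2: "Suc (m - 1) \<noteq> hp t" using m2 by auto
      have a3: "m - 1 \<noteq> Suc (hp t)" using m2 False by auto
      have "valid t (m - 1)" using a1 a3 m2 unfolding valid_def by auto
      moreover have "m - 1 < m" "m - 1 \<le> T" using m2 by auto
      moreover have "nxt t (m - 1) = m" using a1 a2 m2 unfolding nxt_def by auto
      ultimately show ?thesis by (rule that)
    qed
    obtain \<tau> where tau: "gr \<tau> = RR t p" using less.IH[OF p(2) p(1)] by blast
    have "gr (Suc \<tau>) = RR t (nxt t p)" using gstep[OF p(1) p(3) assms(1) tau] by blast
    then have "gr (Suc \<tau>) = RR t m" using p(4) by simp
    then show ?thesis by blast
  qed
qed

lemma reach: "t < T \<Longrightarrow> valid t m \<Longrightarrow> \<exists>\<tau>. gr \<tau> = RR t m"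
proof (induction t arbitrary: m)
  case 0
  have "gr 0 = RR 0 1" using W0_eq by simp
  then show ?case using reach_block 0 by blast
next
  case (Suc t)
  have "\<exists>\<tau>. gr \<tau> = RR t (Suc T)" using Suc.IH[of "Suc T"] Suc.prems valid_end by simp
  then have "\<exists>\<tau>. gr \<tau> = RR (Suc t) 1" using block_end Suc.prems by simp
  then show ?case using reach_block Suc.prems by blast
qed

lemma inv: "gr \<tau> = 0 \<or> (\<exists>t m. t < T \<and> valid t m \<and> m \<le> T \<and> gr \<tau> = RR t m)"
proof (induction \<tau>)
  case 0
  then show ?case using W0_eq valid_1 T_ge by (intro disjI2 exI[of _ 0] exI[of _ 1]) auto
next
  case (Suc \<tau>)
  then show ?case
  proof
    assume z: "gr \<tau> = 0"
    have "\<not> (\<exists>c\<in>CC. c \<le> gr \<tau>)" using coins_pos z by force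
    then show ?thesis using z by simp
  next
    assume "\<exists>t m. t < T \<and> valid t m \<and> m \<le> T \<and> gr \<tau> = RR t m"
    then obtain t m where h: "t < T" "valid t m" "m \<le> T" "gr \<tau> = RR t m" by blast
    have g: "gr (Suc \<tau>) = RR t (nxt t m)" using gstep[OF h(2,3,1,4)] by blast
    have v: "valid t (nxt t m)" using nxt_props h by blast
    show ?thesis
    proof (cases "nxt t m \<le> T")
      case True then show ?thesis using g v h by blast
    next
      case False
      then have n: "nxt t m = Suc T" using v by (simp add: valid_def)
      show ?thesis
      proof (cases "Suc t < T")
        case True
        then show ?thesis using g n block_end valid_1 T_ge by (intro disjI2 exI[of _ "Suc t"] exI[of _ 1]) auto
      next
        case False
        then have "t = T - 1" using h by simp
        then show ?thesis using g n last_end by simp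
      qed
    qed
  qed
qed

end



context sim
begin

lemma main:
  "(\<exists>t. st t = qacc) \<longleftrightarrow> trans_coin \<delta> FF f g CARD('g) B T qacc dollar blank blank 2 T \<in> greedy_set CC W0"
proof -
  define cs where "cs = trans_coin \<delta> FF f g CARD('g) B T qacc dollar blank blank 2 T"
  have T1: "Suc (T - 1) = T" "T - 1 < T" using T_ge by auto
  have cs_eq: "cs = tu qacc dollar blank blank 2"
    using trans_eq[of 2 T qacc dollar blank blank] T_ge Q_last Q_T unfolding cs_def by simp
  have hf: "st (T - 1) \<in> FF" by (rule final_halted)
  have sh: "hp (T - 1) = 2" "tp (T - 1) 2 = blank" "tp (T - 1) 3 = blank" using shape[OF hf] by auto
  have t1: "tp (T - 1) 1 = dollar" using basic_inv[of "T - 1"] by simp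
  have v1: "valid (T - 1) 1" by (rule valid_1)
  have sh2: "Suc 1 = hp (T - 1)" using sh by simp
  note kX = kind_X[OF v1 sh2]
  have u01: "u0 (T - 1) 1 = tu (st (T - 1)) dollar blank blank 2"
    using kX sh t1 by (simp add: numeral_2_eq_2 numeral_3_eq_3)
  have c0_last: "c0 (T - 1) 1 = tu (st (T - 1)) dollar blank blank 2"
    unfolding c0_def u01 using Q_last Q_T T1 by simp
  obtain e where e: "T - 2 - 1 = e" by blast
  have eT: "Suc (Suc (Suc e)) = T" "Suc (Suc e) = T - 1" using T_ge e by auto
  have tu_q: "tu q dollar blank blank 2 = int (g dollar) * b ^ Suc (Suc e) + pc q blank * b ^ Suc e + int (g blank) * b ^ e" for q
    unfolding tu_def e by (rule refl)
  show ?thesis unfolding cs_def[symmetric]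
  proof
    assume "\<exists>t. st t = qacc"
    then have acc: "st (T - 1) = qacc" using accept_iff by simp
    obtain \<tau> where tau: "gr \<tau> = RR (T - 1) 1" using reach[OF T1(2) v1] by blast
    have gs: "(\<exists>c\<in>CC. c \<le> gr \<tau>) \<and> Max {c \<in> CC. c \<le> gr \<tau>} = c0 (T - 1) 1"
      using gstep[OF v1 _ T1(2) tau] T_ge by simp
    have "cs = Max {c \<in> CC. c \<le> gr \<tau>}" using gs c0_last acc cs_eq by simp
    then show "cs \<in> greedy_set CC W0" unfolding greedy_set_def using gs by blast
  next
    assume "cs \<in> greedy_set CC W0"
    then obtain \<tau> where tau: "cs = Max {c \<in> CC. c \<le> gr \<tau>}" "\<exists>c\<in>CC. c \<le> gr \<tau>"
      unfolding greedy_set_def by blast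
    show "\<exists>t. st t = qacc"
    proof (rule ccontr)
      assume "\<not> (\<exists>t. st t = qacc)"
      then have rej: "st (T - 1) = qrej" using hf by auto
      have csZ: "cs \<le> Z - 2"
      proof -
        have "int (g dollar) * b ^ Suc (Suc e) + pc qacc blank * b ^ Suc e + int (g blank) * b ^ e \<le> b ^ Suc (Suc (Suc e)) - 2"
        proof (rule three_le)
          have "int (g dollar) \<le> int CARD('g)" "int (g blank) \<le> int CARD('g)" using g_rng by simp_all
          then show "int (g dollar) \<le> b - 2" "int (g blank) \<le> b - 2" using k_le_b by linarith+
          show "0 \<le> int (g dollar)" "0 \<le> int (g blank)" by simp_all
          show "0 \<le> pc qacc blank" "pc qacc blank \<le> b - 2" using pc_rng[of qacc blank] by linarith+
          show "2 \<le> b" using b_pos by linarith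
        qed
        then show ?thesis using cs_eq tu_q eT by simp
      qed
      have cslo: "b ^ (T - 1) \<le> cs"
      proof -
        have "1 * b ^ Suc (Suc e) \<le> int (g dollar) * b ^ Suc (Suc e)" using g_rng[of dollar] b_pos by (intro mult_right_mono) auto
        then have a: "b ^ Suc (Suc e) \<le> int (g dollar) * b ^ Suc (Suc e)" by simp
        have n: "0 \<le> pc qacc blank * b ^ Suc e" "0 \<le> int (g blank) * b ^ e" using pc_lt g_lt b_pos by simp_all
        have c: "cs = int (g dollar) * b ^ Suc (Suc e) + pc qacc blank * b ^ Suc e + int (g blank) * b ^ e"
          using cs_eq tu_q[of qacc] by simp
        have "b ^ Suc (Suc e) \<le> cs" using a n c by linarith
        then show ?thesis using eT by simp
      qed
      from inv[of \<tau>] show False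
      proof
        assume "gr \<tau> = 0"
        then show False using tau(2) coins_pos by force
      next
        assume "\<exists>t m. t < T \<and> valid t m \<and> m \<le> T \<and> gr \<tau> = RR t m"
        then obtain t m where h: "t < T" "valid t m" "m \<le> T" "gr \<tau> = RR t m" by blast
        have "Max {c \<in> CC. c \<le> gr \<tau>} = c0 t m" using gstep[OF h(2,3,1,4)] by blast
        then have cs0: "cs = c0 t m" using tau by simp
        show False
        proof (cases "Suc t < T")
          case True
          have cp0: "cprops (u0 t m) (v0 t m)" using c0_in h by blast
          then have a: "Z - 1 \<le> u0 t m * Z - v0 t m" unfolding cprops_def by auto
          have q1: "1 \<le> Q (Suc t)" using Q_pos[OF True] by simp
          have "c0 t m = (u0 t m * Z - v0 t m) * Q (Suc t)" unfolding c0_def using Q_Suc[OF True] by (simp add: algebra_simps)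
          moreover have "(Z - 1) * 1 \<le> (u0 t m * Z - v0 t m) * Q (Suc t)"
          proof (rule mult_mono)
            have Z1: "1 \<le> Z" using b_pos by simp
            show "Z - 1 \<le> u0 t m * Z - v0 t m" by (rule a)
            show "1 \<le> Q (Suc t)" by (rule q1)
            show "0 \<le> u0 t m * Z - v0 t m" using a Z1 by linarith
            show "0 \<le> (1::int)" by simp
          qed
          ultimately show False using cs0 csZ by simp
        next
          case False
          then have tT: "t = T - 1" using h by simp
          have c0u: "c0 t m = u0 t m" unfolding c0_def using tT Q_last Q_T T1 by simp
          have mm: "m = 1 \<or> 4 \<le> m" using h(2) sh tT unfolding valid_def by auto
          then show False
          proof
            assume m1: "m = 1"
            then have "tu qrej dollar blank blank 2 = tu qacc dollar blank blank 2"
              using cs0 c0u u01 tT rej cs_eq by simp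
            then have "pc qrej blank * b ^ Suc e = pc qacc blank * b ^ Suc e" unfolding tu_q by simp
            then have "pc qrej blank = pc qacc blank" using b_pos by simp
            then show False using pc_inj acc_rej by blast
          next
            assume m4: "4 \<le> m"
            have "m \<noteq> hp t" "Suc m \<noteq> hp t" using m4 sh tT by auto
            then have "u0 t m = cu (tp t m) m" using kind_C[OF h(2,3)] by blast
            moreover have "cu (tp t m) m < b ^ Suc (T - m)" using cu_lt[of m] m4 h(3) by simp
            moreover have "b ^ Suc (T - m) \<le> b ^ (T - 1)" using m4 h(3) T_ge by (intro pow_mono_le) auto
            ultimately show False using cs0 c0u cslo by simp
          qed
        qed
      qed
    qed
  qed
qed

end

theorem lemma3p1:
  fixes \<delta> :: "'q::finite \<Rightarrow> 'g::finite \<Rightarrow> 'q \<times> 'g \<times> dir"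
    and q0 qacc qrej :: 'q
    and blank dollar :: 'g
    and \<Sigma> :: "'g set"
    and f :: "'q \<Rightarrow> nat" and g :: "'g \<Rightarrow> nat"
    and B :: nat
    and x :: "'g list"
    and T C_M ell :: nat
  assumes acc_rej: "qacc \<noteq> qrej"
    and Sigma: "\<Sigma> \<subseteq> UNIV - {blank}"
    and dollar_blank: "dollar \<noteq> blank"
    and x_in: "set x \<subseteq> \<Sigma>"
    and f_bij: "bij_betw f UNIV {1..CARD('q)}"
    and g_bij: "bij_betw g UNIV {1..CARD('g)}"
    and B_ge: "B \<ge> (CARD('q) + 1) * CARD('g) + 2"
    and left_end: "\<forall>q. q \<notin> {qacc, qrej} \<longrightarrow> (\<exists>q'. \<delta> q dollar = (q', dollar, R))"
    and T_def: "T = C_M * length x ^ ell"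
    and T_ge: "T \<ge> length x + 3"
    and halts: "\<exists>t < T. fst (tm_run \<delta> {qacc, qrej} (init_config q0 dollar blank x) t) \<in> {qacc, qrej}"
    and halt_shape: "\<forall>t. (case tm_run \<delta> {qacc, qrej} (init_config q0 dollar blank x) t of (q, h, a) \<Rightarrow>
                         q \<in> {qacc, qrej} \<longrightarrow> h = 2 \<and> a 2 = blank \<and> a 3 = blank)"
  shows "(\<exists>t. fst (tm_run \<delta> {qacc, qrej} (init_config q0 dollar blank x) t) = qacc)
     \<longleftrightarrow> trans_coin \<delta> {qacc, qrej} f g CARD('g) B T qacc dollar blank blank 2 T
           \<in> greedy_set (coin_set \<delta> {qacc, qrej} f g CARD('g) B T dollar)
                (encode f g CARD('g) B T (init_config q0 dollar blank x)
                   * bpow B ((int T - 1) * int T))"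
proof -
  interpret S: sim \<delta> q0 qacc qrej blank dollar f g B x T
    using acc_rej dollar_blank f_bij g_bij B_ge left_end T_ge halts halt_shape by unfold_locales auto
  show ?thesis using S.main unfolding S.st_def S.run_def by simp
qed


end
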